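(* Let $\Theta$ be an inner function and let $a\in\mathbb D$, $a\ne0$, be such that $\Theta(-a)\ne0$. Define $\widetilde\Theta=\Theta\circ\varphi_a$. Let $f\in K_\Theta$ and $g=f\circ\varphi_a$. Then there exists $c_f\in\mathbb C$ such that $g-c_f\in K_{\widetilde\Theta}$.
   Context: $\mathbb D$ is the unit disc, $H^2$ the Hardy space on $\mathbb D$, and for an inner function $\Theta$, $K_\Theta=H^2\ominus\Theta H^2$. For $a\in\mathbb D$, $\varphi_a(z)=\frac{z-a}{1-\overline a z}$. *)

theory Defs
  imports "HOL-Analysis.Analysis"
begin

abbreviation unit_disc :: "complex set" where
  "unit_disc \<equiv> ball 0 1"

definition moebius :: "complex \<Rightarrow> complex \<Rightarrow> complex" where
  "moebius a z = (z - a) / (1 - cnj a * z)"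

definition taylor_coeff :: "(complex \<Rightarrow> complex) \<Rightarrow> nat \<Rightarrow> complex" where
  "taylor_coeff f n = (deriv ^^ n) f 0 / of_nat (fact n)"

definition H2 :: "(complex \<Rightarrow> complex) set" where
  "H2 = {f. f holomorphic_on unit_disc \<and> summable (\<lambda>n. (norm (taylor_coeff f n))\<^sup>2)}"

definition h2_inner :: "(complex \<Rightarrow> complex) \<Rightarrow> (complex \<Rightarrow> complex) \<Rightarrow> complex" where
  "h2_inner f g = (\<Sum>n. taylor_coeff f n * cnj (taylor_coeff g n))"

definition inner_fun :: "(complex \<Rightarrow> complex) \<Rightarrow> bool" where
  "inner_fun \<Theta> \<longleftrightarrow> \<Theta> holomorphic_on unit_disc
     \<and> (\<exists>M. \<forall>z\<in>unit_disc. norm (\<Theta> z) \<le> M)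
     \<and> (AE t in lebesgue_on {0..2*pi}.
          \<exists>L. ((\<lambda>r. \<Theta> (of_real r * cis t)) \<longlongrightarrow> L) (at_left 1) \<and> norm L = 1)"

definition model_space :: "(complex \<Rightarrow> complex) \<Rightarrow> (complex \<Rightarrow> complex) set" where
  "model_space \<Theta> = {f \<in> H2. \<forall>h\<in>H2. h2_inner f (\<lambda>z. \<Theta> z * h z) = 0}"

end

theory Submission
  imports Defs "HOL-Complex_Analysis.Complex_Analysis"
begin

lemma tc_fps:
  assumes "f has_fps_expansion F"
  shows "taylor_coeff f n = fps_nth F n"
  using fps_nth_fps_expansion[OF assms] by (simp add: taylor_coeff_def)

lemma hol_fps:
  assumes "f holomorphic_on ball 0 r" "0 < r"
  shows "f has_fps_expansion fps_expansion f 0"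
  using assms by (intro has_fps_expansion_fps_expansion) auto

lemma tc_eq_fps: "taylor_coeff f n = fps_nth (fps_expansion f 0) n"
  by (simp add: taylor_coeff_def fps_expansion_def)

lemma tc_cong:
  assumes "\<And>z. z \<in> ball 0 r \<Longrightarrow> f z = g z" "0 < r"
  shows "taylor_coeff f n = taylor_coeff g n"
proof -
  have "eventually (\<lambda>z. f z = g z) (nhds 0)"
    using eventually_nhds_in_open[of "ball 0 r" 0] assms
    by (auto elim!: eventually_mono)
  then show ?thesis unfolding taylor_coeff_def
    using higher_deriv_cong_ev by metis
qed

lemma tc_add:
  assumes "f holomorphic_on ball 0 r" "g holomorphic_on ball 0 r" "0 < r"
  shows "taylor_coeff (\<lambda>z. f z + g z) n = taylor_coeff f n + taylor_coeff g n"
  using tc_fps[OF has_fps_expansion_add[OF hol_fps[OF assms(1,3)] hol_fps[OF assms(2,3)]]]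
  by (simp add: tc_eq_fps)

lemma tc_diff:
  assumes "f holomorphic_on ball 0 r" "g holomorphic_on ball 0 r" "0 < r"
  shows "taylor_coeff (\<lambda>z. f z - g z) n = taylor_coeff f n - taylor_coeff g n"
  using tc_fps[OF has_fps_expansion_diff[OF hol_fps[OF assms(1,3)] hol_fps[OF assms(2,3)]]]
  by (simp add: tc_eq_fps)

lemma tc_cmult:
  assumes "f holomorphic_on ball 0 r" "0 < r"
  shows "taylor_coeff (\<lambda>z. c * f z) n = c * taylor_coeff f n"
  using tc_fps[OF has_fps_expansion_cmult_left[OF hol_fps[OF assms]]]
  by (simp add: tc_eq_fps)

lemma tc_mult:
  assumes "f holomorphic_on ball 0 r" "g holomorphic_on ball 0 r" "0 < r"
  shows "taylor_coeff (\<lambda>z. f z * g z) n = (\<Sum>i=0..n. taylor_coeff f i * taylor_coeff g (n - i))"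
  using tc_fps[OF has_fps_expansion_mult[OF hol_fps[OF assms(1,3)] hol_fps[OF assms(2,3)]]]
  by (simp add: tc_eq_fps fps_mult_nth)

lemma tc_const: "taylor_coeff (\<lambda>z. c) n = (if n = 0 then c else 0)"
  using tc_fps[OF has_fps_expansion_const[of c]] by simp

lemma tc_X:
  assumes "f holomorphic_on ball 0 r" "0 < r"
  shows "taylor_coeff (\<lambda>z. z * f z) n = (if n = 0 then 0 else taylor_coeff f (n - 1))"
  using tc_fps[OF has_fps_expansion_mult[OF has_fps_expansion_fps_X hol_fps[OF assms]]]
  by (simp add: tc_eq_fps)

lemma tc_0: "taylor_coeff f 0 = f 0"
  by (simp add: taylor_coeff_def)

lemma tc_sums:
  assumes "f holomorphic_on ball 0 r" "norm z < r"
  shows "(\<lambda>n. taylor_coeff f n * z ^ n) sums f z"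
  using holomorphic_power_series[OF assms(1), of z] assms(2)
  by (simp add: taylor_coeff_def)

lemma tc_unique:
  assumes "\<And>z. norm z < r \<Longrightarrow> (\<lambda>n. c n * z ^ n) sums f z" "0 < r"
  shows "taylor_coeff f n = c n"
proof -
  have rad: "fps_conv_radius (Abs_fps c) \<ge> r"
    unfolding fps_conv_radius_def
  proof (rule conv_radius_geI_ex)
    fix r' assume "0 < r'" "ereal r' < ereal r"
    then show "\<exists>z. norm z = r' \<and> summable (\<lambda>n. fps_nth (Abs_fps c) n * z ^ n)"
      using assms(1)[of "complex_of_real r'"]
      by (intro exI[of _ "complex_of_real r'"]) (auto dest: sums_summable)
  qed
  have "f has_fps_expansion Abs_fps c"
    unfolding has_fps_expansion_def
  proof
    show "0 < fps_conv_radius (Abs_fps c)" using rad assms(2)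
      by (meson ereal_less(2) order.strict_trans2)
    have "eventually (\<lambda>z. z \<in> ball 0 r) (nhds (0::complex))"
      using assms(2) by (intro eventually_nhds_in_open) auto
    then show "\<forall>\<^sub>F z in nhds 0. eval_fps (Abs_fps c) z = f z"
      by (rule eventually_mono) (use assms in \<open>auto simp: eval_fps_def sums_iff\<close>)
  qed
  then show ?thesis using tc_fps by fastforce
qed


definition ee :: "real \<Rightarrow> complex" where "ee s = exp (2 * of_real pi * \<i> * of_real s)"

lemma norm_ee [simp]: "norm (ee s) = 1"
  by (simp add: ee_def)

lemma cnj_ee: "cnj (ee s) = inverse (ee s)"
  by (simp add: ee_def exp_minus[symmetric] exp_cnj)

lemma ee_nz [simp]: "ee s \<noteq> 0" by (simp add: ee_def)

lemma continuous_ee [continuous_intros]: "continuous_on A ee"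
  unfolding ee_def by (intro continuous_intros)

lemma ee_in_ball: "0 \<le> r \<Longrightarrow> r < R \<Longrightarrow> complex_of_real r * ee s \<in> ball 0 R"
  by (simp add: norm_mult)

lemma cont_comp_ee:
  assumes "F holomorphic_on ball 0 R" "0 \<le> r" "r < R"
  shows "continuous_on A (\<lambda>s. F (complex_of_real r * ee s))"
proof -
  have "continuous_on A (\<lambda>s. complex_of_real r * ee s)" by (intro continuous_intros)
  then show ?thesis
    using continuous_on_compose2[OF holomorphic_on_imp_continuous_on[OF assms(1)]] ee_in_ball[OF assms(2,3)]
    by blast
qed

lemma coeff_integral:
  assumes holF: "F holomorphic_on ball 0 R" and r: "0 < r" "r < R"
  shows "((\<lambda>s. F (complex_of_real r * ee s) * cnj (ee s) ^ m) has_integral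
           (taylor_coeff F m * complex_of_real r ^ m)) {0..1}"
proof -
  have cb: "cball 0 r \<subseteq> ball (0::complex) R" using r by auto
  have "((\<lambda>u. F u / (u - 0) ^ Suc m) has_contour_integral
          ((2 * pi * \<i>) / (fact m) * (deriv ^^ m) F 0)) (circlepath 0 r)"
    by (rule Cauchy_has_contour_integral_higher_derivative_circlepath)
       (use holF cb r in \<open>auto intro: holomorphic_on_imp_continuous_on holomorphic_on_subset\<close>)
  then have I: "((\<lambda>x. F (circlepath 0 r x) / (circlepath 0 r x) ^ Suc m *
        vector_derivative (circlepath 0 r) (at x within {0..1})) has_integral
        (2 * pi * \<i> * taylor_coeff F m)) {0..1}"
    by (simp add: has_contour_integral_def taylor_coeff_def)
  have eq: "F (circlepath 0 r x) / (circlepath 0 r x) ^ Suc m *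
        vector_derivative (circlepath 0 r) (at x within {0..1}) =
        (2 * pi * \<i> / complex_of_real r ^ m) * (F (complex_of_real r * ee x) * cnj (ee x) ^ m)"
    if "x \<in> {0..1}" for x
  proof -
    have vd: "vector_derivative (circlepath 0 r) (at x within {0..1}) = 2 * pi * \<i> * r * ee x"
      using that by (simp add: vector_derivative_circlepath01 ee_def)
    have cp: "circlepath 0 r x = complex_of_real r * ee x"
      by (simp add: circlepath ee_def)
    show ?thesis unfolding vd cp cnj_ee using r
      by (simp add: field_simps power_inverse)
  qed
  have "((\<lambda>x. (2 * pi * \<i> / complex_of_real r ^ m) * (F (complex_of_real r * ee x) * cnj (ee x) ^ m))
        has_integral (2 * pi * \<i> * taylor_coeff F m)) {0..1}"
    using has_integral_eq[OF eq I] by blast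
  then have "((\<lambda>x. (complex_of_real r ^ m / (2 * pi * \<i>)) * ((2 * pi * \<i> / complex_of_real r ^ m) * (F (complex_of_real r * ee x) * cnj (ee x) ^ m)))
        has_integral (complex_of_real r ^ m / (2 * pi * \<i>)) * (2 * pi * \<i> * taylor_coeff F m)) {0..1}"
    by (rule has_integral_mult_right)
  then show ?thesis using r by (simp add: field_simps)
qed

lemma conv_radius_tc:
  assumes "F holomorphic_on ball 0 R"
  shows "conv_radius (taylor_coeff F) \<ge> ereal R"
proof (rule conv_radius_geI_ex)
  fix r assume "0 < r" "ereal r < ereal R"
  then show "\<exists>z. norm z = r \<and> summable (\<lambda>n. taylor_coeff F n * z ^ n)"
    using tc_sums[OF assms, of "complex_of_real r"]
    by (intro exI[of _ "complex_of_real r"]) (auto dest: sums_summable)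
qed

lemma abs_summable_tc:
  assumes "F holomorphic_on ball 0 R" "0 \<le> r" "r < R"
  shows "summable (\<lambda>n. norm (taylor_coeff F n) * r ^ n)"
proof -
  have "ereal (norm (complex_of_real r)) < conv_radius (taylor_coeff F)"
    using conv_radius_tc[OF assms(1)] assms(2,3) by (simp add: order.strict_trans2[of _ "ereal R"])
  from abs_summable_in_conv_radius[OF this] show ?thesis
    using assms(2) by (simp add: norm_mult norm_power)
qed

lemma parseval:
  assumes holF: "F holomorphic_on ball 0 R" and holG: "G holomorphic_on ball 0 R"
    and r: "0 < r" "r < R"
  shows "((\<lambda>s. F (complex_of_real r * ee s) * cnj (G (complex_of_real r * ee s))) has_integral
           (\<Sum>n. taylor_coeff F n * cnj (taylor_coeff G n) * complex_of_real r ^ (2*n))) {0..1}"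
    and "summable (\<lambda>n. taylor_coeff F n * cnj (taylor_coeff G n) * complex_of_real r ^ (2*n))"
proof -
  define g where "g = taylor_coeff G"
  define T where "T m s = cnj (g m) * complex_of_real r ^ m * cnj (ee s) ^ m" for m s
  have Tn: "norm (T m s) = norm (g m) * r ^ m" for m s
    using r by (simp add: T_def norm_mult norm_power)
  have summ: "summable (\<lambda>m. norm (g m) * r ^ m)"
    unfolding g_def by (rule abs_summable_tc[OF holG]) (use r in auto)
  have ul: "uniform_limit {0..1} (\<lambda>N s. \<Sum>m<N. T m s) (\<lambda>s. \<Sum>m. T m s) sequentially"
    by (rule Weierstrass_m_test[OF _ summ]) (simp add: Tn)
  have Tsum: "(\<Sum>m. T m s) = cnj (G (complex_of_real r * ee s))" for s
  proof -
    have "(\<lambda>n. g n * (complex_of_real r * ee s) ^ n) sums G (complex_of_real r * ee s)"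
      unfolding g_def by (rule tc_sums[OF holG]) (use r in \<open>simp add: norm_mult\<close>)
    then have "(\<lambda>n. cnj (g n * (complex_of_real r * ee s) ^ n)) sums cnj (G (complex_of_real r * ee s))"
      by (simp only: sums_cnj)
    then show ?thesis by (simp add: T_def sums_iff power_mult_distrib mult.assoc)
  qed
  have contF: "continuous_on {0..1} (\<lambda>s. F (complex_of_real r * ee s))"
    by (rule cont_comp_ee[OF holF]) (use r in auto)
  have contG: "continuous_on {0..1} (\<lambda>s. G (complex_of_real r * ee s))"
    by (rule cont_comp_ee[OF holG]) (use r in auto)
  have bF: "bounded ((\<lambda>s. F (complex_of_real r * ee s)) ` {0..1})"
    by (intro compact_imp_bounded compact_continuous_image contF) auto
  have bG: "bounded ((\<lambda>s. cnj (G (complex_of_real r * ee s))) ` {0..1})"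
  proof -
    have "continuous_on {0..1} (\<lambda>s. cnj (G (complex_of_real r * ee s)))"
      by (intro continuous_intros contG)
    then show ?thesis by (intro compact_imp_bounded compact_continuous_image) auto
  qed
  have ul2: "uniform_limit {0..1} (\<lambda>N s. F (complex_of_real r * ee s) * (\<Sum>m<N. T m s))
               (\<lambda>s. F (complex_of_real r * ee s) * cnj (G (complex_of_real r * ee s))) sequentially"
    using uniform_lim_mult[OF uniform_limit_const ul] bF bG unfolding Tsum by auto
  have contN: "continuous_on {0..1} (\<lambda>s. F (complex_of_real r * ee s) * (\<Sum>m<N. T m s))" for N
    unfolding T_def by (intro continuous_intros contF)
  obtain I J where I: "\<And>N. ((\<lambda>s. F (complex_of_real r * ee s) * (\<Sum>m<N. T m s)) has_integral I N) {0..1}"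
    and J: "((\<lambda>s. F (complex_of_real r * ee s) * cnj (G (complex_of_real r * ee s))) has_integral J) {0..1}"
    and IJ: "I \<longlonglongrightarrow> J"
    using uniform_limit_integral[OF ul2 contN sequentially_bot] by blast
  define c where "c n = taylor_coeff F n * cnj (taylor_coeff G n) * complex_of_real r ^ (2*n)" for n
  have IN: "I N = (\<Sum>m<N. c m)" for N
  proof -
    have "((\<lambda>s. \<Sum>m<N. (cnj (g m) * complex_of_real r ^ m) * (F (complex_of_real r * ee s) * cnj (ee s) ^ m))
          has_integral (\<Sum>m<N. (cnj (g m) * complex_of_real r ^ m) * (taylor_coeff F m * complex_of_real r ^ m))) {0..1}"
      by (rule has_integral_sum, simp, rule has_integral_mult_right, rule coeff_integral[OF holF r])
    moreover have "(\<lambda>s. \<Sum>m<N. (cnj (g m) * complex_of_real r ^ m) * (F (complex_of_real r * ee s) * cnj (ee s) ^ m))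
        = (\<lambda>s. F (complex_of_real r * ee s) * (\<Sum>m<N. T m s))"
      by (simp add: T_def sum_distrib_left mult_ac)
    ultimately have "((\<lambda>s. F (complex_of_real r * ee s) * (\<Sum>m<N. T m s)) has_integral
        (\<Sum>m<N. (cnj (g m) * complex_of_real r ^ m) * (taylor_coeff F m * complex_of_real r ^ m))) {0..1}"
      by simp
    from has_integral_unique[OF I[of N] this]
    have "I N = (\<Sum>m<N. (cnj (g m) * complex_of_real r ^ m) * (taylor_coeff F m * complex_of_real r ^ m))" .
    also have "\<dots> = (\<Sum>m<N. c m)"
      by (simp add: c_def g_def power_mult power2_eq_square mult_ac)
    finally show ?thesis .
  qed
  have "I = (\<lambda>N. \<Sum>m<N. c m)" using IN by (intro ext) simp
  then have "c sums J" unfolding sums_def using IJ by simp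
  then show "summable c" "((\<lambda>s. F (complex_of_real r * ee s) * cnj (G (complex_of_real r * ee s))) has_integral suminf c) {0..1}"
    using J by (auto simp: sums_iff)
qed


section \<open>Square summable sequences\<close>

definition sqs :: "(nat \<Rightarrow> complex) \<Rightarrow> bool" where
  "sqs x \<longleftrightarrow> summable (\<lambda>n. (norm (x n))\<^sup>2)"

definition nn :: "(nat \<Rightarrow> complex) \<Rightarrow> real" where
  "nn x = (\<Sum>n. (norm (x n))\<^sup>2)"

lemma nn_nonneg: "sqs x \<Longrightarrow> 0 \<le> nn x"
  unfolding nn_def sqs_def by (auto intro!: suminf_nonneg)

lemma two_uv: "2 * (u * v) \<le> u\<^sup>2 + v\<^sup>2" for u v :: real
proof -
  have "0 \<le> (u - v)\<^sup>2" by simp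
  then show ?thesis by (simp add: power2_diff)
qed

lemma prod_le_sq: "norm (a * cnj b) \<le> ((norm a)\<^sup>2 + (norm b)\<^sup>2) / 2"
  using two_uv[of "norm a" "norm b"] by (simp add: norm_mult)

lemma prod_le_sq_t:
  assumes "0 < t"
  shows "norm (a * cnj b) \<le> (t * (norm a)\<^sup>2 + (norm b)\<^sup>2 / t) / 2"
proof -
  define u where "u = sqrt t * norm a"
  define v where "v = norm b / sqrt t"
  have uv: "u * v = norm a * norm b" using assms by (simp add: u_def v_def)
  have u2: "u\<^sup>2 = t * (norm a)\<^sup>2" using assms by (simp add: u_def power_mult_distrib)
  have v2: "v\<^sup>2 = (norm b)\<^sup>2 / t" using assms by (simp add: v_def power_divide)
  show ?thesis using two_uv[of u v] unfolding uv u2 v2 by (simp add: norm_mult)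
qed

lemma sqs_ip_summable_norm:
  assumes "sqs x" "sqs y"
  shows "summable (\<lambda>n. norm (x n * cnj (y n)))"
proof -
  have s: "summable (\<lambda>n. ((norm (x n))\<^sup>2 + (norm (y n))\<^sup>2) / 2)"
    using assms unfolding sqs_def by (intro summable_divide summable_add)
  have "norm (norm (x n * cnj (y n))) \<le> ((norm (x n))\<^sup>2 + (norm (y n))\<^sup>2) / 2" for n
    using prod_le_sq[of "x n" "y n"] by simp
  then show ?thesis by (intro summable_comparison_test[OF _ s]) blast
qed

lemma sqs_ip_summable:
  assumes "sqs x" "sqs y"
  shows "summable (\<lambda>n. x n * cnj (y n))"
  using summable_norm_cancel[OF sqs_ip_summable_norm[OF assms]] .

lemma sqs_add: assumes "sqs x" "sqs y" shows "sqs (\<lambda>n. x n + y n)"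
proof -
  have b: "norm ((norm (x n + y n))\<^sup>2) \<le> 2 * (norm (x n))\<^sup>2 + 2 * (norm (y n))\<^sup>2" for n
  proof -
    have "(norm (x n + y n))\<^sup>2 \<le> (norm (x n) + norm (y n))\<^sup>2"
      by (rule power_mono[OF norm_triangle_ineq norm_ge_zero])
    also have "\<dots> = (norm (x n))\<^sup>2 + (norm (y n))\<^sup>2 + 2 * (norm (x n) * norm (y n))"
      by (simp add: power2_sum)
    also have "\<dots> \<le> 2 * (norm (x n))\<^sup>2 + 2 * (norm (y n))\<^sup>2"
      using two_uv[of "norm (x n)" "norm (y n)"] by linarith
    finally show ?thesis by simp
  qed
  have s: "summable (\<lambda>n. 2 * (norm (x n))\<^sup>2 + 2 * (norm (y n))\<^sup>2)"
    using assms unfolding sqs_def by (intro summable_add summable_mult) 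
  show ?thesis unfolding sqs_def
    by (rule summable_comparison_test[OF _ s]) (intro exI[of _ 0] allI impI b)
qed

lemma sqs_cmult: assumes "sqs x" shows "sqs (\<lambda>n. c * x n)"
proof -
  have "summable (\<lambda>n. (norm c)\<^sup>2 * (norm (x n))\<^sup>2)"
    using assms unfolding sqs_def by (rule summable_mult)
  then show ?thesis unfolding sqs_def by (simp add: norm_mult power_mult_distrib)
qed

lemma sqs_minus: assumes "sqs x" shows "sqs (\<lambda>n. - x n)"
  using assms unfolding sqs_def by simp

lemma sqs_diff: assumes "sqs x" "sqs y" shows "sqs (\<lambda>n. x n - y n)"
  using sqs_add[OF assms(1) sqs_minus[OF assms(2)]] by simp

lemma sqs_zero: "sqs (\<lambda>n. 0)" by (simp add: sqs_def)

lemma sqs_finite_supp: "sqs (\<lambda>n. if n < N then x n else 0)"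
  unfolding sqs_def
  by (rule summable_finite[of "{..<N}"]) auto

lemma sqs_shift: "sqs x \<Longrightarrow> sqs (\<lambda>n. x (Suc n))"
  unfolding sqs_def using summable_Suc_iff[of "\<lambda>n. (norm (x n))\<^sup>2"] by simp

lemma sqs_shift_right: "sqs x \<Longrightarrow> sqs (\<lambda>n. if n = 0 then 0 else x (n - 1))"
proof -
  assume "sqs x"
  then have "summable (\<lambda>n. (norm (if Suc n = 0 then 0 else x (Suc n - 1)))\<^sup>2)"
    by (simp add: sqs_def)
  then show ?thesis unfolding sqs_def
    using summable_Suc_iff[of "\<lambda>n. (norm (if n = 0 then 0 else x (n - 1)))\<^sup>2"] by simp
qed

lemma CS:
  assumes "sqs x" "sqs y"
  shows "norm (\<Sum>n. x n * cnj (y n)) \<le> sqrt (nn x) * sqrt (nn y)"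
proof -
  have sx: "summable (\<lambda>n. (norm (x n))\<^sup>2)" and sy: "summable (\<lambda>n. (norm (y n))\<^sup>2)"
    using assms by (auto simp: sqs_def)
  have le_t: "norm (\<Sum>n. x n * cnj (y n)) \<le> (t * nn x + nn y / t) / 2" if "t > 0" for t
  proof -
    have "norm (\<Sum>n. x n * cnj (y n)) \<le> (\<Sum>n. norm (x n * cnj (y n)))"
      by (rule summable_norm[OF sqs_ip_summable_norm[OF assms]])
    also have "\<dots> \<le> (\<Sum>n. (t * (norm (x n))\<^sup>2 + (norm (y n))\<^sup>2 / t) / 2)"
      by (intro suminf_le prod_le_sq_t that sqs_ip_summable_norm assms summable_divide summable_add
          summable_mult sx sy)
    also have "\<dots> = (t * nn x + nn y / t) / 2"
      unfolding nn_def
      by (subst suminf_divide, intro summable_add summable_mult sx sy summable_divide)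
         (simp add: suminf_add[symmetric] suminf_mult[symmetric] summable_mult sx sy summable_divide suminf_divide)
    finally show ?thesis .
  qed
  show ?thesis
  proof (cases "nn x = 0 \<or> nn y = 0")
    case True
    then have "(\<forall>n. x n = 0) \<or> (\<forall>n. y n = 0)"
      using suminf_eq_zero_iff[OF sx] suminf_eq_zero_iff[OF sy] unfolding nn_def
      by (auto simp: fun_eq_iff)
    then show ?thesis using nn_nonneg[OF assms(1)] nn_nonneg[OF assms(2)] by auto
  next
    case False
    with nn_nonneg[OF assms(1)] nn_nonneg[OF assms(2)] have px: "nn x > 0" and py: "nn y > 0" by auto
    define t where "t = sqrt (nn y) / sqrt (nn x)"
    have "t > 0" using px py by (simp add: t_def)
    have "(t * nn x + nn y / t) / 2 = sqrt (nn x) * sqrt (nn y)"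
      using px py unfolding t_def
      by (simp add: field_simps real_sqrt_mult[symmetric] real_sqrt_mult_self)
    with le_t[OF \<open>t > 0\<close>] show ?thesis by simp
  qed
qed


abbreviation tc where "tc \<equiv> taylor_coeff"

lemma H2_iff: "f \<in> H2 \<longleftrightarrow> f holomorphic_on ball 0 1 \<and> sqs (tc f)"
  by (simp add: H2_def sqs_def)

lemma H2_hol: "f \<in> H2 \<Longrightarrow> f holomorphic_on ball 0 1"
  by (simp add: H2_iff)

lemma H2_sqs: "f \<in> H2 \<Longrightarrow> sqs (tc f)"
  by (simp add: H2_iff)

lemma H2_add: "f \<in> H2 \<Longrightarrow> g \<in> H2 \<Longrightarrow> (\<lambda>z. f z + g z) \<in> H2"
proof -
  assume f: "f \<in> H2" and g: "g \<in> H2"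
  have "tc (\<lambda>z. f z + g z) = (\<lambda>n. tc f n + tc g n)"
    using f g by (intro ext tc_add[of _ 1]) (auto simp: H2_iff)
  then show ?thesis using f g sqs_add[of "tc f" "tc g"] unfolding H2_iff
    by (auto intro!: holomorphic_intros)
qed

lemma H2_diff: "f \<in> H2 \<Longrightarrow> g \<in> H2 \<Longrightarrow> (\<lambda>z. f z - g z) \<in> H2"
proof -
  assume f: "f \<in> H2" and g: "g \<in> H2"
  have "tc (\<lambda>z. f z - g z) = (\<lambda>n. tc f n - tc g n)"
    using f g by (intro ext tc_diff[of _ 1]) (auto simp: H2_iff)
  then show ?thesis using f g sqs_diff[of "tc f" "tc g"] unfolding H2_iff
    by (auto intro!: holomorphic_intros)
qed

lemma H2_cmult: "f \<in> H2 \<Longrightarrow> (\<lambda>z. c * f z) \<in> H2"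
proof -
  assume f: "f \<in> H2"
  have "tc (\<lambda>z. c * f z) = (\<lambda>n. c * tc f n)"
    using f by (intro ext tc_cmult[of _ 1]) (auto simp: H2_iff)
  then show ?thesis using f sqs_cmult[of "tc f" c] unfolding H2_iff
    by (auto intro!: holomorphic_intros)
qed

lemma sqs_tc_const: "sqs (tc (\<lambda>z. c))"
proof -
  have "sqs (\<lambda>n. if n < 1 then c else 0)" by (rule sqs_finite_supp)
  moreover have "(\<lambda>n. if n < 1 then c else 0) = tc (\<lambda>z. c)"
    by (auto simp: tc_const fun_eq_iff)
  ultimately show ?thesis by simp
qed

lemma H2_const: "(\<lambda>z. c) \<in> H2"
  unfolding H2_iff using sqs_tc_const by auto

lemma h2_inner_add_right:
  assumes "f \<in> H2" "g \<in> H2" "h \<in> H2"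
  shows "h2_inner f (\<lambda>z. g z + h z) = h2_inner f g + h2_inner f h"
proof -
  have "tc (\<lambda>z. g z + h z) n = tc g n + tc h n" for n
    using assms by (intro tc_add[of _ 1]) (auto simp: H2_iff)
  then show ?thesis unfolding h2_inner_def
    using assms by (simp add: distrib_left suminf_add[symmetric] sqs_ip_summable H2_iff)
qed

lemma h2_inner_cmult_right:
  assumes "f \<in> H2" "g \<in> H2"
  shows "h2_inner f (\<lambda>z. c * g z) = cnj c * h2_inner f g"
proof -
  have "tc (\<lambda>z. c * g z) n = c * tc g n" for n
    using assms by (intro tc_cmult[of _ 1]) (auto simp: H2_iff)
  then show ?thesis unfolding h2_inner_def
    using assms by (simp add: suminf_mult[symmetric] sqs_ip_summable H2_iff mult_ac)
qed

lemma h2_inner_diff_left: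
  assumes "f \<in> H2" "g \<in> H2" "h \<in> H2"
  shows "h2_inner (\<lambda>z. f z - g z) h = h2_inner f h - h2_inner g h"
proof -
  have "tc (\<lambda>z. f z - g z) n = tc f n - tc g n" for n
    using assms by (intro tc_diff[of _ 1]) (auto simp: H2_iff)
  then show ?thesis unfolding h2_inner_def
    using assms by (simp add: left_diff_distrib suminf_diff[symmetric] sqs_ip_summable H2_iff)
qed

lemma h2_inner_const_right: "h2_inner f (\<lambda>z. c) = f 0 * cnj c"
proof -
  have "h2_inner f (\<lambda>z. c) = (\<Sum>n\<in>{0}. tc f n * cnj (tc (\<lambda>z. c) n))"
    unfolding h2_inner_def by (rule suminf_finite) (auto simp: tc_const)
  then show ?thesis by (simp add: tc_const tc_0)
qed

lemma h2_inner_const_left: "h2_inner (\<lambda>z. c) g = c * cnj (g 0)"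
proof -
  have "h2_inner (\<lambda>z. c) g = (\<Sum>n\<in>{0}. tc (\<lambda>z. c) n * cnj (tc g n))"
    unfolding h2_inner_def by (rule suminf_finite) (auto simp: tc_const)
  then show ?thesis by (simp add: tc_const tc_0)
qed

lemma mean_sq:
  assumes "F holomorphic_on ball 0 R" "0 < r" "r < R"
  shows "((\<lambda>s. (norm (F (complex_of_real r * ee s)))\<^sup>2) has_integral
           (\<Sum>n. (norm (tc F n))\<^sup>2 * r ^ (2*n))) {0..1}"
    and "summable (\<lambda>n. (norm (tc F n))\<^sup>2 * r ^ (2*n))"
proof -
  have eq: "tc F n * cnj (tc F n) * complex_of_real r ^ (2*n) = complex_of_real ((norm (tc F n))\<^sup>2 * r ^ (2*n))" for n
    unfolding of_real_mult complex_norm_square by simp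
  have s: "summable (\<lambda>n. complex_of_real ((norm (tc F n))\<^sup>2 * r ^ (2*n)))"
    using parseval(2)[OF assms(1) assms(1) assms(2,3)] unfolding eq .
  then show S: "summable (\<lambda>n. (norm (tc F n))\<^sup>2 * r ^ (2*n))" by (simp only: summable_complex_of_real)
  have I: "((\<lambda>s. F (complex_of_real r * ee s) * cnj (F (complex_of_real r * ee s))) has_integral
      complex_of_real (\<Sum>n. (norm (tc F n))\<^sup>2 * r ^ (2*n))) {0..1}"
    using parseval(1)[OF assms(1) assms(1) assms(2,3)] unfolding eq suminf_of_real[OF S] .
  have "((Re \<circ> (\<lambda>s. F (complex_of_real r * ee s) * cnj (F (complex_of_real r * ee s)))) has_integral
      Re (complex_of_real (\<Sum>n. (norm (tc F n))\<^sup>2 * r ^ (2*n)))) {0..1}"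
    by (rule has_integral_linear[OF I bounded_linear_Re])
  then show "((\<lambda>s. (norm (F (complex_of_real r * ee s)))\<^sup>2) has_integral
           (\<Sum>n. (norm (tc F n))\<^sup>2 * r ^ (2*n))) {0..1}"
    by (simp add: o_def complex_norm_square[symmetric])
qed

lemma H2_bound:
  assumes holG: "G holomorphic_on ball 0 1" and X: "X \<in> H2" and r0: "r0 < 1"
    and A: "0 \<le> A" and B: "0 \<le> B"
    and bd: "\<And>z. r0 < norm z \<Longrightarrow> norm z < 1 \<Longrightarrow> (norm (G z))\<^sup>2 \<le> A * (norm (X z))\<^sup>2 + B"
  shows "G \<in> H2" and "nn (tc G) \<le> A * nn (tc X) + B"
proof -
  have holX: "X holomorphic_on ball 0 1" and sX: "sqs (tc X)" using X by (auto simp: H2_iff)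
  define r1 where "r1 = max r0 0"
  have r1: "0 \<le> r1" "r1 < 1" using r0 by (auto simp: r1_def)
  have meanle: "(\<Sum>n. (norm (tc G n))\<^sup>2 * r ^ (2*n)) \<le> A * nn (tc X) + B" if r: "r1 < r" "r < 1" for r
  proof -
    have r': "0 < r" "r < 1" using r r1 by auto
    have IG: "((\<lambda>s. (norm (G (complex_of_real r * ee s)))\<^sup>2) has_integral
           (\<Sum>n. (norm (tc G n))\<^sup>2 * r ^ (2*n))) {0..1}" by (rule mean_sq(1)[OF holG r'])
    have IX: "((\<lambda>s. (norm (X (complex_of_real r * ee s)))\<^sup>2) has_integral
           (\<Sum>n. (norm (tc X n))\<^sup>2 * r ^ (2*n))) {0..1}" by (rule mean_sq(1)[OF holX r'])
    have IXB: "((\<lambda>s. A * (norm (X (complex_of_real r * ee s)))\<^sup>2 + B) has_integral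
           (A * (\<Sum>n. (norm (tc X n))\<^sup>2 * r ^ (2*n)) + B)) {0..1}"
      using has_integral_add[OF has_integral_mult_right[OF IX, of A] has_integral_const_real[of B 0 1]]
      by simp
    have "(\<Sum>n. (norm (tc G n))\<^sup>2 * r ^ (2*n)) \<le> A * (\<Sum>n. (norm (tc X n))\<^sup>2 * r ^ (2*n)) + B"
    proof (rule has_integral_le[OF IG IXB])
      fix s :: real assume "s \<in> {0..1}"
      show "(norm (G (complex_of_real r * ee s)))\<^sup>2 \<le> A * (norm (X (complex_of_real r * ee s)))\<^sup>2 + B"
        using r r1 by (intro bd) (auto simp: norm_mult r1_def)
    qed
    also have "(\<Sum>n. (norm (tc X n))\<^sup>2 * r ^ (2*n)) \<le> nn (tc X)"
      unfolding nn_def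
    proof (rule suminf_le)
      show "(norm (tc X n))\<^sup>2 * r ^ (2*n) \<le> (norm (tc X n))\<^sup>2" for n
        using r' by (intro mult_left_le power_le_one) auto
      show "summable (\<lambda>n. (norm (tc X n))\<^sup>2 * r ^ (2*n))" by (rule mean_sq(2)[OF holX r'])
      show "summable (\<lambda>n. (norm (tc X n))\<^sup>2)" using sX by (simp add: sqs_def)
    qed
    then have "A * (\<Sum>n. (norm (tc X n))\<^sup>2 * r ^ (2*n)) + B \<le> A * nn (tc X) + B"
      using A by (intro add_right_mono mult_left_mono) auto
    finally show ?thesis .
  qed
  have part: "(\<Sum>n<N. (norm (tc G n))\<^sup>2) \<le> A * nn (tc X) + B" for N
  proof -
    have lim: "((\<lambda>r. \<Sum>n<N. (norm (tc G n))\<^sup>2 * r ^ (2*n)) \<longlongrightarrow> (\<Sum>n<N. (norm (tc G n))\<^sup>2 * 1 ^ (2*n))) (at_left 1)"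
      by (intro tendsto_intros)
    have ev: "eventually (\<lambda>r. (\<Sum>n<N. (norm (tc G n))\<^sup>2 * r ^ (2*n)) \<le> A * nn (tc X) + B) (at_left (1::real))"
    proof -
      have "eventually (\<lambda>r. r1 < r \<and> r < 1) (at_left (1::real))"
        using eventually_at_left_real[OF r1(2)] by (rule eventually_mono) auto
      then show ?thesis
      proof (rule eventually_mono)
        fix r :: real assume r: "r1 < r \<and> r < 1"
        have "(\<Sum>n<N. (norm (tc G n))\<^sup>2 * r ^ (2*n)) \<le> (\<Sum>n. (norm (tc G n))\<^sup>2 * r ^ (2*n))"
          using r r1 by (intro sum_le_suminf mean_sq(2)[OF holG]) auto
        also have "\<dots> \<le> A * nn (tc X) + B" using meanle r by auto
        finally show "(\<Sum>n<N. (norm (tc G n))\<^sup>2 * r ^ (2*n)) \<le> A * nn (tc X) + B" .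
      qed
    qed
    show ?thesis using tendsto_upperbound[OF lim ev] by simp
  qed
  have sG: "summable (\<lambda>n. (norm (tc G n))\<^sup>2)"
    by (rule summableI_nonneg_bounded[OF _ part]) auto
  then show "G \<in> H2" using holG by (simp add: H2_def)
  show "nn (tc G) \<le> A * nn (tc X) + B"
    unfolding nn_def[of "tc G"] by (rule suminf_le_const[OF sG part])
qed


lemma zero_H2: "(\<lambda>z. 0) \<in> H2" using H2_const[of 0] .

lemma nn_zero: "nn (tc (\<lambda>z. 0)) = 0"
  by (simp add: nn_def tc_const)

lemma H2_bounded:
  assumes "G holomorphic_on ball 0 1" "\<And>z. norm z < 1 \<Longrightarrow> norm (G z) \<le> M"
  shows "G \<in> H2"
proof (rule H2_bound(1)[OF assms(1) zero_H2, of 0 0 "M\<^sup>2"])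
  fix z :: complex assume "0 < norm z" "norm z < 1"
  then show "(norm (G z))\<^sup>2 \<le> 0 * (norm 0)\<^sup>2 + M\<^sup>2"
    using assms(2)[of z] by (simp add: power_mono)
qed auto

lemma H2_mult_bounded:
  assumes "G holomorphic_on ball 0 1" "\<And>z. norm z < 1 \<Longrightarrow> norm (G z) \<le> M" "X \<in> H2"
  shows "(\<lambda>z. G z * X z) \<in> H2" and "nn (tc (\<lambda>z. G z * X z)) \<le> M\<^sup>2 * nn (tc X)"
proof -
  have hol: "(\<lambda>z. G z * X z) holomorphic_on ball 0 1"
    using assms(1,3) by (auto intro!: holomorphic_intros simp: H2_iff)
  have bd: "(norm (G z * X z))\<^sup>2 \<le> M\<^sup>2 * (norm (X z))\<^sup>2 + 0" if "norm z < 1" for z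
  proof -
    have "norm (G z * X z) \<le> M * norm (X z)"
      using assms(2)[OF that] by (simp add: norm_mult mult_right_mono)
    then have "(norm (G z * X z))\<^sup>2 \<le> (M * norm (X z))\<^sup>2" by (intro power_mono) auto
    then show ?thesis by (simp add: power_mult_distrib)
  qed
  show "(\<lambda>z. G z * X z) \<in> H2" by (rule H2_bound(1)[OF hol assms(3), of 0 "M\<^sup>2" 0]) (use bd in auto)
  show "nn (tc (\<lambda>z. G z * X z)) \<le> M\<^sup>2 * nn (tc X)"
    using H2_bound(2)[OF hol assms(3), of 0 "M\<^sup>2" 0] bd by auto
qed

lemma H2_zmult: "X \<in> H2 \<Longrightarrow> (\<lambda>z. z * X z) \<in> H2"
  using H2_mult_bounded(1)[of "\<lambda>z. z" 1 X] by (auto intro: holomorphic_intros)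

definition kk :: "complex \<Rightarrow> complex \<Rightarrow> complex" where
  "kk l z = 1 / (1 - cnj l * z)"

lemma norm_cl_lt: "norm l < 1 \<Longrightarrow> norm z \<le> 1 \<Longrightarrow> norm (cnj l * z) < 1"
  using mult_right_le_one_le[of "norm l" "norm z"] by (simp add: norm_mult)

lemma kk_nz: "norm l < 1 \<Longrightarrow> norm z \<le> 1 \<Longrightarrow> 1 - cnj l * z \<noteq> 0"
  using norm_cl_lt[of l z] by auto

lemma kk_hol: "norm l < 1 \<Longrightarrow> kk l holomorphic_on ball 0 1"
  unfolding kk_def by (intro holomorphic_intros) (use kk_nz[of l] in force)

lemma kk_bound:
  assumes "norm l < 1" "norm z < 1"
  shows "norm (kk l z) \<le> 1 / (1 - norm l)"
proof -
  have "norm (cnj l * z) \<le> norm l" using assms mult_right_le_one_le[of "norm l" "norm z"] by (simp add: norm_mult)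
  then have "1 - norm l \<le> norm (1 - cnj l * z)"
    using norm_triangle_ineq2[of 1 "cnj l * z"] by simp
  then show ?thesis using assms(1) unfolding kk_def
    by (simp add: norm_divide divide_simps)
qed

lemma H2_kk: "norm l < 1 \<Longrightarrow> X \<in> H2 \<Longrightarrow> (\<lambda>z. kk l z * X z) \<in> H2"
  using H2_mult_bounded(1)[OF kk_hol kk_bound] by auto

definition DD :: "(complex \<Rightarrow> complex) \<Rightarrow> complex \<Rightarrow> complex \<Rightarrow> complex" where
  "DD X l z = (if z = l then deriv X l else (X z - X l) / (z - l))"

lemma DD_hol:
  assumes "X holomorphic_on ball 0 1" "norm l < 1"
  shows "DD X l holomorphic_on ball 0 1"
  unfolding DD_def[abs_def] by (rule pole_lemma[OF assms(1)]) (use assms in auto)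

lemma H2_DD:
  assumes X: "X \<in> H2" and l: "norm l < 1"
  shows "DD X l \<in> H2"
proof -
  define d where "d = (1 - norm l) / 2"
  have d: "0 < d" using l by (simp add: d_def)
  show ?thesis
  proof (rule H2_bound(1)[OF DD_hol[OF H2_hol[OF X] l] X, of "(1 + norm l)/2" "2 / d\<^sup>2" "2 * (norm (X l))\<^sup>2 / d\<^sup>2"])
    show "(1 + norm l) / 2 < 1" using l by simp
    fix z :: complex assume z: "(1 + norm l) / 2 < norm z" "norm z < 1"
    have zl: "d \<le> norm (z - l)"
      using z norm_triangle_ineq2[of z l] by (simp add: d_def)
    then have "z \<noteq> l" using d by auto
    then have "norm (DD X l z) = norm (X z - X l) / norm (z - l)" by (simp add: DD_def norm_divide)
    also have "\<dots> \<le> (norm (X z) + norm (X l)) / d"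
      using zl d by (intro frac_le norm_triangle_ineq4) auto
    finally have "(norm (DD X l z))\<^sup>2 \<le> ((norm (X z) + norm (X l)) / d)\<^sup>2"
      by (intro power_mono) auto
    also have "\<dots> = (norm (X z) + norm (X l))\<^sup>2 / d\<^sup>2" by (simp add: power_divide)
    also have "\<dots> \<le> (2 * (norm (X z))\<^sup>2 + 2 * (norm (X l))\<^sup>2) / d\<^sup>2"
      using two_uv[of "norm (X z)" "norm (X l)"] d
      by (intro divide_right_mono) (auto simp: power2_sum)
    also have "\<dots> = 2 / d\<^sup>2 * (norm (X z))\<^sup>2 + 2 * (norm (X l))\<^sup>2 / d\<^sup>2"
      by (simp add: add_divide_distrib)
    finally show "(norm (DD X l z))\<^sup>2 \<le> 2 / d\<^sup>2 * (norm (X z))\<^sup>2 + 2 * (norm (X l))\<^sup>2 / d\<^sup>2" .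
  qed auto
qed


lemma h2_inner_cong:
  assumes "\<And>z. norm z < 1 \<Longrightarrow> f z = f' z" "\<And>z. norm z < 1 \<Longrightarrow> g z = g' z"
  shows "h2_inner f g = h2_inner f' g'"
proof -
  have "tc f n = tc f' n" "tc g n = tc g' n" for n
    using assms by (auto intro!: tc_cong[of 1])
  then show ?thesis by (simp add: h2_inner_def)
qed

lemma H2_cong:
  assumes "f \<in> H2" "\<And>z. norm z < 1 \<Longrightarrow> f z = g z"
  shows "g \<in> H2"
proof -
  have "tc f n = tc g n" for n using assms by (auto intro!: tc_cong[of 1])
  moreover have "g holomorphic_on ball 0 1"
    using holomorphic_transform[OF H2_hol[OF assms(1)]] assms(2) by auto
  ultimately show ?thesis using assms(1) by (auto simp: H2_def)
qed

lemma adj: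
  assumes F: "F \<in> H2" and X: "X \<in> H2" and l: "norm l < 1"
  shows "h2_inner (\<lambda>z. kk l z * F z) (\<lambda>z. (z - l) * X z) = h2_inner F (\<lambda>z. z * X z)"
proof -
  define K where "K = (\<lambda>z. kk l z * F z)"
  have K: "K \<in> H2" unfolding K_def by (rule H2_kk[OF l F])
  have holK: "K holomorphic_on ball 0 1" using K by (rule H2_hol)
  have holX: "X holomorphic_on ball 0 1" using X by (rule H2_hol)
  define a where "a = tc K"
  define x where "x = tc X"
  define sx where "sx n = (if n = 0 then 0 else x (n - 1))" for n
  have sa: "sqs a" unfolding a_def using K by (rule H2_sqs)
  have sxx: "sqs x" unfolding x_def using X by (rule H2_sqs)
  have ssx: "sqs sx" unfolding sx_def[abs_def] using sxx by (rule sqs_shift_right)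
  have sa1: "sqs (\<lambda>n. a (Suc n))" using sa by (rule sqs_shift)
  have Fz: "F z = K z - cnj l * (z * K z)" if "norm z < 1" for z
  proof -
    have "1 - cnj l * z \<noteq> 0" using kk_nz[OF l, of z] that by simp
    have "K z - cnj l * (z * K z) = (1 - cnj l * z) * K z" by (simp add: algebra_simps)
    also have "\<dots> = F z" using \<open>1 - cnj l * z \<noteq> 0\<close> by (simp add: K_def kk_def)
    finally show ?thesis by simp
  qed
  have rel: "tc F n = a n - cnj l * (if n = 0 then 0 else a (n - 1))" for n
  proof -
    have "tc F n = tc (\<lambda>z. K z - cnj l * (z * K z)) n"
      using Fz by (intro tc_cong[of 1]) auto
    also have "\<dots> = tc K n - tc (\<lambda>z. cnj l * (z * K z)) n"
      by (rule tc_diff[of _ 1]) (auto intro!: holomorphic_intros holK)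
    also have "tc (\<lambda>z. cnj l * (z * K z)) n = cnj l * tc (\<lambda>z. z * K z) n"
      by (rule tc_cmult[of _ 1]) (auto intro!: holomorphic_intros holK)
    also have "tc (\<lambda>z. z * K z) n = (if n = 0 then 0 else a (n - 1))"
      unfolding a_def by (rule tc_X[OF holK]) simp
    finally show ?thesis unfolding a_def .
  qed
  have tzx: "tc (\<lambda>z. z * X z) n = sx n" for n
    unfolding sx_def x_def by (rule tc_X[OF holX]) simp
  have tzlx: "tc (\<lambda>z. (z - l) * X z) n = sx n - l * x n" for n
  proof -
    have "tc (\<lambda>z. (z - l) * X z) n = tc (\<lambda>z. z * X z - l * X z) n"
      by (simp add: algebra_simps)
    also have "\<dots> = tc (\<lambda>z. z * X z) n - tc (\<lambda>z. l * X z) n"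
      by (rule tc_diff[of _ 1]) (auto intro!: holomorphic_intros holX)
    also have "tc (\<lambda>z. l * X z) n = l * x n"
      unfolding x_def by (rule tc_cmult[OF holX]) simp
    finally show ?thesis using tzx by simp
  qed
  have S1: "summable (\<lambda>n. a n * cnj (sx n))" by (rule sqs_ip_summable[OF sa ssx])
  have S2: "summable (\<lambda>n. a n * cnj (x n))" by (rule sqs_ip_summable[OF sa sxx])
  have S3: "summable (\<lambda>n. a (Suc n) * cnj (x n))" by (rule sqs_ip_summable[OF sa1 sxx])
  have shiftA: "(\<Sum>n. a n * cnj (sx n)) = (\<Sum>n. a (Suc n) * cnj (x n))"
    using suminf_split_head[OF S1] by (simp add: sx_def)
  have "h2_inner K (\<lambda>z. (z - l) * X z) = (\<Sum>n. a n * cnj (sx n - l * x n))"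
    unfolding h2_inner_def a_def[symmetric] tzlx ..
  also have "\<dots> = (\<Sum>n. a n * cnj (sx n) - cnj l * (a n * cnj (x n)))"
    by (simp add: algebra_simps)
  also have "\<dots> = (\<Sum>n. a n * cnj (sx n)) - cnj l * (\<Sum>n. a n * cnj (x n))"
    using suminf_diff[OF S1 summable_mult[OF S2, of "cnj l"]] suminf_mult[OF S2, of "cnj l"] by simp
  also have "\<dots> = (\<Sum>n. a (Suc n) * cnj (x n)) - cnj l * (\<Sum>n. a n * cnj (x n))"
    unfolding shiftA ..
  finally have L: "h2_inner K (\<lambda>z. (z - l) * X z) =
      (\<Sum>n. a (Suc n) * cnj (x n)) - cnj l * (\<Sum>n. a n * cnj (x n))" .
  define f where "f = tc F"
  have sf: "sqs f" unfolding f_def using F by (rule H2_sqs)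
  have S4: "summable (\<lambda>n. f n * cnj (sx n))" by (rule sqs_ip_summable[OF sf ssx])
  have "h2_inner F (\<lambda>z. z * X z) = (\<Sum>n. f n * cnj (sx n))"
    unfolding h2_inner_def f_def[symmetric] tzx ..
  also have "\<dots> = (\<Sum>n. f (Suc n) * cnj (x n))"
    using suminf_split_head[OF S4] by (simp add: sx_def)
  also have "\<dots> = (\<Sum>n. a (Suc n) * cnj (x n) - cnj l * (a n * cnj (x n)))"
    by (simp add: f_def rel algebra_simps)
  also have "\<dots> = (\<Sum>n. a (Suc n) * cnj (x n)) - cnj l * (\<Sum>n. a n * cnj (x n))"
    using suminf_diff[OF S3 summable_mult[OF S2, of "cnj l"]] suminf_mult[OF S2, of "cnj l"] by simp
  finally show ?thesis using L unfolding K_def by simp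
qed

lemma h2_inner_diff_const_left:
  assumes "f \<in> H2" "Y \<in> H2"
  shows "h2_inner (\<lambda>z. f z - c) Y = h2_inner f Y - c * cnj (Y 0)"
  using h2_inner_diff_left[OF assms(1) H2_const assms(2)] h2_inner_const_left by simp

lemma DD_mult:
  assumes holT: "T holomorphic_on ball 0 1" and holw: "w holomorphic_on ball 0 1"
    and l: "norm l < 1" and z: "norm z < 1"
  shows "DD (\<lambda>z. T z * w z) l z = T z * DD w l z + w l * DD T l z"
proof (cases "z = l")
  case True
  have "T field_differentiable at l" "w field_differentiable at l"
    using holT holw l by (auto intro!: holomorphic_on_imp_differentiable_at)
  then show ?thesis using True by (simp add: DD_def algebra_simps)
next
  case False
  have "T z * ((w z - w l) / (z - l)) + w l * ((T z - T l) / (z - l)) =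
        (T z * (w z - w l) + w l * (T z - T l)) / (z - l)"
    by (simp add: add_divide_distrib)
  also have "\<dots> = (T z * w z - T l * w l) / (z - l)" by (simp add: algebra_simps)
  finally show ?thesis using False by (simp add: DD_def)
qed

lemma partII:
  assumes holT: "T holomorphic_on ball 0 1" and bT: "\<And>z. norm z < 1 \<Longrightarrow> norm (T z) \<le> M"
    and f: "f \<in> model_space T" and l: "norm l < 1" and Tl: "T l \<noteq> 0"
    and w: "w \<in> H2"
  defines "c \<equiv> f 0 + h2_inner f (\<lambda>z. z * DD T l z) / cnj (T l)"
  shows "h2_inner (\<lambda>z. kk l z * (f z - c)) (\<lambda>z. T z * w z) = 0"
proof -
  have fH2: "f \<in> H2" and orth: "\<And>h. h \<in> H2 \<Longrightarrow> h2_inner f (\<lambda>z. T z * h z) = 0"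
    using f by (auto simp: model_space_def)
  have Fc: "(\<lambda>z. f z - c) \<in> H2" by (rule H2_diff[OF fH2 H2_const])
  have TH2: "T \<in> H2" by (rule H2_bounded[OF holT bT])
  have holw: "w holomorphic_on ball 0 1" using w by (rule H2_hol)
  have Tw: "(\<lambda>z. T z * w z) \<in> H2" by (rule H2_mult_bounded(1)[OF holT bT w])
  define X where "X = DD (\<lambda>z. T z * w z) l"
  have XH2: "X \<in> H2" unfolding X_def by (rule H2_DD[OF Tw l])
  define \<mu> where "\<mu> = T l * w l"
  define K' where "K' = (\<lambda>z. kk l z * (f z - c))"
  have K'H2: "K' \<in> H2" unfolding K'_def by (rule H2_kk[OF l Fc])
  have decomp: "T z * w z = (z - l) * X z + \<mu>" if "norm z < 1" for z
  proof (cases "z = l")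
    case True then show ?thesis by (simp add: \<mu>_def)
  next
    case False
    then have "z - l \<noteq> 0" by simp
    then have "(z - l) * X z = T z * w z - T l * w l" by (simp add: X_def DD_def False)
    then show ?thesis by (simp add: \<mu>_def)
  qed
  have zlX: "(\<lambda>z. (z - l) * X z) \<in> H2"
  proof (rule H2_mult_bounded(1)[OF _ _ XH2, of _ 2])
    show "(\<lambda>z. z - l) holomorphic_on ball 0 1" by (intro holomorphic_intros)
    fix z :: complex assume "norm z < 1"
    then show "norm (z - l) \<le> 2" using l norm_triangle_ineq4[of z l] by linarith
  qed
  have step1: "h2_inner K' (\<lambda>z. T z * w z) = h2_inner (\<lambda>z. f z - c) (\<lambda>z. z * X z) + (f 0 - c) * cnj \<mu>"
  proof -
    have "h2_inner K' (\<lambda>z. T z * w z) = h2_inner K' (\<lambda>z. (z - l) * X z + \<mu>)"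
      using decomp by (intro h2_inner_cong) auto
    also have "\<dots> = h2_inner K' (\<lambda>z. (z - l) * X z) + h2_inner K' (\<lambda>z. \<mu>)"
      by (rule h2_inner_add_right[OF K'H2 zlX H2_const])
    also have "h2_inner K' (\<lambda>z. (z - l) * X z) = h2_inner (\<lambda>z. f z - c) (\<lambda>z. z * X z)"
      unfolding K'_def by (rule adj[OF Fc XH2 l])
    also have "h2_inner K' (\<lambda>z. \<mu>) = (f 0 - c) * cnj \<mu>"
      by (simp add: h2_inner_const_right K'_def kk_def)
    finally show ?thesis .
  qed
  define A where "A = (\<lambda>z. T z * (z * DD w l z))"
  define B where "B = (\<lambda>z. z * DD T l z)"
  have AH2: "A \<in> H2" unfolding A_def
    by (rule H2_mult_bounded(1)[OF holT bT H2_zmult[OF H2_DD[OF w l]]])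
  have hA: "(\<lambda>z. z * DD w l z) \<in> H2" by (rule H2_zmult[OF H2_DD[OF w l]])
  have BH2: "B \<in> H2" unfolding B_def by (rule H2_zmult[OF H2_DD[OF TH2 l]])
  have wB: "(\<lambda>z. w l * B z) \<in> H2" by (rule H2_cmult[OF BH2])
  have zX: "z * X z = A z + w l * B z" if "norm z < 1" for z
    using DD_mult[OF holT holw l that] by (simp add: X_def A_def B_def algebra_simps)
  have "h2_inner (\<lambda>z. f z - c) (\<lambda>z. z * X z) = h2_inner (\<lambda>z. f z - c) (\<lambda>z. A z + w l * B z)"
    using zX by (intro h2_inner_cong) auto
  also have "\<dots> = h2_inner (\<lambda>z. f z - c) A + h2_inner (\<lambda>z. f z - c) (\<lambda>z. w l * B z)"
    by (rule h2_inner_add_right[OF Fc AH2 wB])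
  also have "h2_inner (\<lambda>z. f z - c) (\<lambda>z. w l * B z) = cnj (w l) * h2_inner (\<lambda>z. f z - c) B"
    by (rule h2_inner_cmult_right[OF Fc BH2])
  also have "h2_inner (\<lambda>z. f z - c) A = h2_inner f A"
    using h2_inner_diff_const_left[OF fH2 AH2, of c] by (simp add: A_def)
  also have "h2_inner (\<lambda>z. f z - c) B = h2_inner f B"
    using h2_inner_diff_const_left[OF fH2 BH2, of c] by (simp add: B_def)
  also have "h2_inner f A = 0" unfolding A_def by (rule orth[OF hA])
  finally have step2: "h2_inner (\<lambda>z. f z - c) (\<lambda>z. z * X z) = cnj (w l) * h2_inner f B" by simp
  have "h2_inner K' (\<lambda>z. T z * w z) = cnj (w l) * h2_inner f B + (f 0 - c) * cnj \<mu>"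
    using step1 step2 by simp
  also have "\<dots> = 0"
    using Tl by (simp add: c_def \<mu>_def B_def field_simps)
  finally show ?thesis unfolding K'_def .
qed


section \<open>Moebius maps\<close>

definition RR :: "complex \<Rightarrow> real" where "RR a = 2 / (1 + norm a)"

lemma RR_gt1: "norm a < 1 \<Longrightarrow> 1 < RR a"
proof -
  assume "norm a < 1"
  moreover have "0 < 1 + norm a" by (simp add: add_pos_nonneg)
  ultimately show ?thesis by (simp add: RR_def less_divide_eq)
qed

lemma moeb_small:
  assumes "norm a < 1" "norm z < RR a"
  shows "norm (cnj a * z) < 1"
proof (cases "a = 0")
  case True then show ?thesis by simp
next
  case False
  then have "norm a * norm z < norm a * RR a" using assms by (intro mult_strict_left_mono) auto
  also have "norm a * RR a \<le> 1"
  proof -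
    have "0 < 1 + norm a" by (simp add: add_pos_nonneg)
    then show ?thesis using assms(1) by (simp add: RR_def pos_divide_le_eq)
  qed
  finally show ?thesis by (simp add: norm_mult)
qed

lemma moeb_denom_nz:
  assumes "norm a < 1" "norm z < RR a"
  shows "1 - cnj a * z \<noteq> 0"
  using moeb_small[OF assms] by auto

lemma moeb_hol: "norm a < 1 \<Longrightarrow> moebius a holomorphic_on ball 0 (RR a)"
  unfolding moebius_def[abs_def] by (intro holomorphic_intros) (use moeb_denom_nz in auto)

lemma moeb_identity:
  "(norm (1 - cnj a * z))\<^sup>2 - (norm (z - a))\<^sup>2 = (1 - (norm a)\<^sup>2) * (1 - (norm z)\<^sup>2)"
  unfolding cmod_power2 by (simp add: algebra_simps power2_eq_square)

lemma moeb_norm_sq: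
  assumes "1 - cnj a * z \<noteq> 0"
  shows "(norm (moebius a z))\<^sup>2 = 1 - (1 - (norm a)\<^sup>2) * (1 - (norm z)\<^sup>2) / (norm (1 - cnj a * z))\<^sup>2"
proof -
  have "(norm (moebius a z))\<^sup>2 = (norm (z - a))\<^sup>2 / (norm (1 - cnj a * z))\<^sup>2"
    by (simp add: moebius_def norm_divide power_divide)
  also have "\<dots> = 1 - (1 - (norm a)\<^sup>2) * (1 - (norm z)\<^sup>2) / (norm (1 - cnj a * z))\<^sup>2"
    using assms moeb_identity[of a z] by (simp add: field_simps)
  finally show ?thesis .
qed

lemma moeb_circle:
  assumes "norm a < 1" "norm z = 1"
  shows "norm (moebius a z) = 1"
proof -
  have "1 - cnj a * z \<noteq> 0" using moeb_denom_nz[OF assms(1)] RR_gt1[OF assms(1)] assms(2) by auto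
  from moeb_norm_sq[OF this] assms(2) have "(norm (moebius a z))\<^sup>2 = 1" by simp
  then show ?thesis using norm_ge_zero[of "moebius a z"] by (smt (verit) power2_eq_1_iff)
qed

lemma moeb_disc_bound:
  assumes a: "norm a < 1" and z: "norm z \<le> r" and r: "r < 1"
  shows "(norm (moebius a z))\<^sup>2 \<le> 1 - (1 - (norm a)\<^sup>2) * (1 - r\<^sup>2) / 4"
proof -
  have z1: "norm z < 1" using z r by simp
  have nz: "1 - cnj a * z \<noteq> 0" using moeb_denom_nz[OF a] RR_gt1[OF a] z1 by auto
  have d2: "(norm (1 - cnj a * z))\<^sup>2 \<le> 4"
  proof -
    have "norm (1 - cnj a * z) \<le> 1 + norm (cnj a * z)" using norm_triangle_ineq4[of 1 "cnj a * z"] by simp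
    also have "norm (cnj a * z) \<le> 1" using a z1 by (simp add: norm_mult mult_le_one)
    finally have "norm (1 - cnj a * z) \<le> 2" by simp
    then have "(norm (1 - cnj a * z))\<^sup>2 \<le> 2\<^sup>2" by (intro power_mono) auto
    then show ?thesis by simp
  qed
  have dpos: "0 < (norm (1 - cnj a * z))\<^sup>2" using nz by simp
  have n1: "0 \<le> 1 - (norm a)\<^sup>2" using a by (simp add: abs_square_le_1 less_imp_le power_le_one)
  have n2: "1 - r\<^sup>2 \<le> 1 - (norm z)\<^sup>2" using z by (simp add: power_mono)
  have r0: "0 \<le> r" using z norm_ge_zero[of z] by linarith
  have n3: "0 \<le> 1 - r\<^sup>2" using r r0 by (simp add: power_le_one)
  have "(1 - (norm a)\<^sup>2) * (1 - r\<^sup>2) / 4 \<le> (1 - (norm a)\<^sup>2) * (1 - (norm z)\<^sup>2) / 4"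
    using n1 n2 by (intro divide_right_mono mult_left_mono) auto
  also have "\<dots> \<le> (1 - (norm a)\<^sup>2) * (1 - (norm z)\<^sup>2) / (norm (1 - cnj a * z))\<^sup>2"
    using n1 n2 n3 dpos d2 by (intro divide_left_mono mult_nonneg_nonneg mult_pos_pos) auto
  finally show ?thesis using moeb_norm_sq[OF nz] by simp
qed

lemma moeb_disc:
  assumes a: "norm a < 1" and z: "norm z < 1"
  shows "norm (moebius a z) < 1"
proof -
  have "(norm (moebius a z))\<^sup>2 \<le> 1 - (1 - (norm a)\<^sup>2) * (1 - (norm z)\<^sup>2) / 4"
    by (rule moeb_disc_bound[OF a order.refl z])
  also have "\<dots> < 1"
    using a z by (simp add: power_strict_mono abs_square_less_1 mult_pos_pos)
  finally have "(norm (moebius a z))\<^sup>2 < 1" .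
  then show ?thesis by (simp add: abs_square_less_1)
qed

lemma moeb_0: "moebius a 0 = - a" by (simp add: moebius_def)

lemma moeb_inv:
  assumes a: "norm a < 1" and z: "norm z < 1"
  shows "moebius (-a) (moebius a z) = z"
proof -
  have nz: "1 - cnj a * z \<noteq> 0" using moeb_denom_nz[OF a] RR_gt1[OF a] z by auto
  have na: "1 - cnj a * a \<noteq> 0"
  proof -
    have "cnj a * a = complex_of_real ((norm a)\<^sup>2)" by (subst complex_norm_square) (rule mult.commute)
    moreover have "(norm a)\<^sup>2 < 1" using a by (simp add: abs_square_less_1)
    ultimately show ?thesis by (metis less_irrefl of_real_eq_1_iff right_minus_eq)
  qed
  have "moebius (-a) (moebius a z) = ((z - a) / (1 - cnj a * z) + a) / (1 + cnj a * ((z - a) / (1 - cnj a * z)))"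
    by (simp add: moebius_def)
  also have "\<dots> = (z - a + a * (1 - cnj a * z)) / ((1 - cnj a * z) + cnj a * (z - a))"
  proof -
    define d where "d = 1 - cnj a * z"
    have dn: "d \<noteq> 0" using nz by (simp add: d_def)
    have e1: "(z - a) / d + a = (z - a + a * d) / d" using dn by (simp add: field_simps)
    have e2: "1 + cnj a * ((z - a) / d) = (d + cnj a * (z - a)) / d" using dn by (simp add: field_simps)
    show ?thesis unfolding d_def[symmetric] e1 e2 using dn by simp
  qed
  also have "\<dots> = (z * (1 - cnj a * a)) / (1 - cnj a * a)"
    by (simp add: algebra_simps)
  also have "\<dots> = z" using na by simp
  finally show ?thesis .
qed


lemma mean_value:
  assumes "G holomorphic_on ball 0 R" "1 < R"
  shows "((\<lambda>s. G (ee s)) has_integral G 0) {0..1}"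
  using coeff_integral[OF assms(1), of 1 0] assms(2) by (simp add: tc_0)

lemma cauchy_pt:
  assumes holG: "G holomorphic_on ball 0 R" and R: "1 < R" and w: "norm w < 1"
  shows "((\<lambda>s. G (ee s) * ee s / (ee s - w)) has_integral G w) {0..1}"
proof -
  have cb: "cball 0 1 \<subseteq> ball (0::complex) R" using R by auto
  have b1: "ball 0 1 \<subseteq> ball (0::complex) R" using R by auto
  have "((\<lambda>u. G u / (u - w) ^ Suc 0) has_contour_integral
          ((2 * pi * \<i>) / (fact 0) * (deriv ^^ 0) G w)) (circlepath 0 1)"
    by (rule Cauchy_has_contour_integral_higher_derivative_circlepath)
       (use holomorphic_on_subset[OF holG b1] holomorphic_on_subset[OF holG cb] w in \<open>auto intro: holomorphic_on_imp_continuous_on\<close>)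
  then have I: "((\<lambda>x. G (circlepath 0 1 x) / (circlepath 0 1 x - w) *
        vector_derivative (circlepath 0 1) (at x within {0..1})) has_integral
        (2 * pi * \<i> * G w)) {0..1}"
    by (simp add: has_contour_integral_def)
  have eq: "G (circlepath 0 1 x) / (circlepath 0 1 x - w) *
        vector_derivative (circlepath 0 1) (at x within {0..1}) =
        (2 * pi * \<i>) * (G (ee x) * ee x / (ee x - w))"
    if "x \<in> {0..1}" for x
  proof -
    have vd: "vector_derivative (circlepath 0 1) (at x within {0..1}) = 2 * pi * \<i> * ee x"
      using that by (simp add: vector_derivative_circlepath01 ee_def)
    have cp: "circlepath 0 1 x = ee x"
      by (simp add: circlepath ee_def)
    show ?thesis unfolding vd cp by (simp add: field_simps)
  qed
  have "((\<lambda>x. (2 * pi * \<i>) * (G (ee x) * ee x / (ee x - w))) has_integral (2 * pi * \<i> * G w)) {0..1}"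
    using has_integral_eq[OF eq I] by blast
  then have "((\<lambda>x. (1 / (2 * pi * \<i>)) * ((2 * pi * \<i>) * (G (ee x) * ee x / (ee x - w))))
        has_integral (1 / (2 * pi * \<i>)) * (2 * pi * \<i> * G w)) {0..1}"
    by (rule has_integral_mult_right)
  then show ?thesis by simp
qed

lemma has_integral_cnj:
  assumes "(f has_integral i) S"
  shows "((\<lambda>x. cnj (f x)) has_integral cnj i) S"
  using has_integral_linear[OF assms bounded_linear_cnj] by (simp add: o_def)

lemma cnj_ee_pow: "ee s ^ n * cnj (ee s) ^ m = (if m \<le> n then ee s ^ (n - m) else cnj (ee s ^ (m - n)))"
proof -
  have e: "ee s * cnj (ee s) = 1" by (simp add: cnj_ee)
  show ?thesis
  proof (cases "m \<le> n")
    case True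
    then have "ee s ^ n * cnj (ee s) ^ m = ee s ^ (n - m) * (ee s * cnj (ee s)) ^ m"
      by (simp add: power_mult_distrib power_add[symmetric])
    then show ?thesis using True e by simp
  next
    case False
    then have "ee s ^ n * cnj (ee s) ^ m = cnj (ee s) ^ (m - n) * (ee s * cnj (ee s)) ^ n"
      by (simp add: power_mult_distrib power_add[symmetric] mult_ac)
    then show ?thesis using False e by simp
  qed
qed

definition cc :: "complex \<Rightarrow> nat \<Rightarrow> nat \<Rightarrow> complex" where
  "cc a n m = (if m \<le> n then (-a) ^ (n - m) else cnj ((-a) ^ (m - n)))"

lemma int_phi:
  assumes a: "norm a < 1"
  shows "((\<lambda>s. moebius a (ee s) ^ n * cnj (moebius a (ee s)) ^ m) has_integral cc a n m) {0..1}"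
proof -
  have hol: "(\<lambda>z. moebius a z ^ j) holomorphic_on ball 0 (RR a)" for j
    using moeb_hol[OF a] by (intro holomorphic_intros)
  have mv: "((\<lambda>s. moebius a (ee s) ^ j) has_integral (-a) ^ j) {0..1}" for j
    using mean_value[OF hol RR_gt1[OF a]] by (simp add: moeb_0)
  have u: "moebius a (ee s) * cnj (moebius a (ee s)) = 1" for s
  proof -
    have "norm (moebius a (ee s)) = 1" by (rule moeb_circle[OF a]) simp
    then show ?thesis using complex_norm_square[of "moebius a (ee s)"] by simp
  qed
  show ?thesis
  proof (cases "m \<le> n")
    case True
    have "moebius a (ee s) ^ n * cnj (moebius a (ee s)) ^ m = moebius a (ee s) ^ (n - m)" for s
    proof -
      have "moebius a (ee s) ^ n * cnj (moebius a (ee s)) ^ m =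
            moebius a (ee s) ^ (n - m) * (moebius a (ee s) * cnj (moebius a (ee s))) ^ m"
        using True by (simp add: power_mult_distrib power_add[symmetric])
      then show ?thesis using u by simp
    qed
    then show ?thesis using mv[of "n - m"] True by (simp add: cc_def)
  next
    case False
    have "moebius a (ee s) ^ n * cnj (moebius a (ee s)) ^ m = cnj (moebius a (ee s) ^ (m - n))" for s
    proof -
      have "moebius a (ee s) ^ n * cnj (moebius a (ee s)) ^ m =
            cnj (moebius a (ee s)) ^ (m - n) * (moebius a (ee s) * cnj (moebius a (ee s))) ^ n"
        using False by (simp add: power_mult_distrib power_add[symmetric] mult_ac)
      then show ?thesis using u by simp
    qed
    then show ?thesis using has_integral_cnj[OF mv[of "m - n"]] False by (simp add: cc_def)
  qed
qed

definition ca :: "complex \<Rightarrow> complex" where "ca a = complex_of_real (1 - (norm a)\<^sup>2)"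

lemma kk_hol_R: "norm a < 1 \<Longrightarrow> kk (-a) holomorphic_on ball 0 (RR a)"
  unfolding kk_def[abs_def] by (intro holomorphic_intros) (use moeb_denom_nz[of "-a"] in \<open>auto simp: RR_def\<close>)

lemma int_k:
  assumes a: "norm a < 1"
  shows "((\<lambda>s. ca a * (kk (-a) (ee s) * cnj (kk (-a) (ee s)) * (ee s ^ n * cnj (ee s) ^ m))) has_integral cc a n m) {0..1}"
proof -
  have hol: "(\<lambda>z. kk (-a) z * z ^ j) holomorphic_on ball 0 (RR a)" for j
    using kk_hol_R[OF a] by (intro holomorphic_intros)
  have na: "norm (-a) < 1" using a by simp
  have ca_k: "ca a * kk (-a) (-a) = 1"
  proof -
    have e: "1 - cnj (-a) * (-a) = ca a"
      unfolding ca_def of_real_diff complex_norm_square by (simp add: mult.commute)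
    have "(norm a)\<^sup>2 < 1" using a by (simp add: abs_square_less_1)
    then have nz: "ca a \<noteq> 0" unfolding ca_def by (simp only: of_real_eq_0_iff)
    show ?thesis unfolding kk_def e using nz by simp
  qed
  have cp: "((\<lambda>s. kk (-a) (ee s) * ee s ^ j * ee s / (ee s - (-a))) has_integral kk (-a) (-a) * (-a) ^ j) {0..1}" for j
    using cauchy_pt[OF hol RR_gt1[OF a] na] by simp
  have ck: "cnj (kk (-a) (ee s)) = ee s / (ee s - (-a))" for s
  proof -
    have en: "ee s \<noteq> 0" by simp
    have "cnj (kk (-a) (ee s)) = 1 / (1 + a * inverse (ee s))"
      by (simp add: kk_def cnj_ee)
    also have "\<dots> = ee s / (ee s + a)" using en by (simp add: field_simps)
    finally show ?thesis by simp
  qed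
  have base: "((\<lambda>s. ca a * (kk (-a) (ee s) * cnj (kk (-a) (ee s)) * ee s ^ j)) has_integral (-a) ^ j) {0..1}" for j
  proof -
    have "((\<lambda>s. ca a * (kk (-a) (ee s) * ee s ^ j * ee s / (ee s - (-a)))) has_integral ca a * (kk (-a) (-a) * (-a) ^ j)) {0..1}"
      by (rule has_integral_mult_right[OF cp])
    moreover have "ca a * (kk (-a) (-a) * (-a) ^ j) = (-a) ^ j"
      using ca_k by (simp only: mult.assoc[symmetric]) simp
    ultimately have "((\<lambda>s. ca a * (kk (-a) (ee s) * ee s ^ j * ee s / (ee s - (-a)))) has_integral (-a) ^ j) {0..1}"
      by simp
    then show ?thesis by (simp add: ck mult_ac)
  qed
  show ?thesis
  proof (cases "m \<le> n")
    case True
    then show ?thesis using base[of "n - m"] by (simp add: cnj_ee_pow cc_def)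
  next
    case False
    have eqf: "cnj (ca a * (kk (-a) (ee s) * cnj (kk (-a) (ee s)) * ee s ^ (m - n))) =
          ca a * (kk (-a) (ee s) * cnj (kk (-a) (ee s)) * (ee s ^ n * cnj (ee s) ^ m))" if "s \<in> {0..1}" for s
      using False by (simp add: cnj_ee_pow ca_def mult_ac)
    have "((\<lambda>s. ca a * (kk (-a) (ee s) * cnj (kk (-a) (ee s)) * (ee s ^ n * cnj (ee s) ^ m))) has_integral cnj ((-a) ^ (m - n))) {0..1}"
      by (rule has_integral_eq[OF eqf has_integral_cnj[OF base[of "m - n"]]])
    then show ?thesis using False by (simp only: cc_def if_False)
  qed
qed


lemma expand_prod:
  "(\<Sum>n<N. p n * x ^ n) * cnj (\<Sum>m<N. q m * y ^ m) =
   (\<Sum>n<N. \<Sum>m<N. (p n * cnj (q m)) * (x ^ n * cnj y ^ m))"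
  by (simp add: cnj_sum sum_product mult_ac)

lemma h2_inner_parseval1:
  assumes "F holomorphic_on ball 0 R" "G holomorphic_on ball 0 R" "1 < R"
  shows "((\<lambda>s. F (ee s) * cnj (G (ee s))) has_integral h2_inner F G) {0..1}"
  using parseval(1)[OF assms(1,2), of 1] assms(3) by (simp add: h2_inner_def)

lemma poly_identity:
  fixes N :: nat and p q :: "nat \<Rightarrow> complex" and a :: complex
  assumes a: "norm a < 1"
  defines "P \<equiv> (\<lambda>z. \<Sum>n<N. p n * z ^ n)" and "Q \<equiv> (\<lambda>z. \<Sum>m<N. q m * z ^ m)"
  shows "h2_inner (\<lambda>z. P (moebius a z)) (\<lambda>z. Q (moebius a z)) =
         ca a * h2_inner (\<lambda>z. kk (-a) z * P z) (\<lambda>z. kk (-a) z * Q z)"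
proof -
  define SS where "SS = (\<Sum>n<N. \<Sum>m<N. (p n * cnj (q m)) * cc a n m)"
  have holP: "(\<lambda>z. P (moebius a z)) holomorphic_on ball 0 (RR a)"
    and holQ: "(\<lambda>z. Q (moebius a z)) holomorphic_on ball 0 (RR a)"
    unfolding P_def Q_def using moeb_hol[OF a] by (auto intro!: holomorphic_intros)
  have holkP: "(\<lambda>z. kk (-a) z * P z) holomorphic_on ball 0 (RR a)"
    and holkQ: "(\<lambda>z. kk (-a) z * Q z) holomorphic_on ball 0 (RR a)"
    unfolding P_def Q_def using kk_hol_R[OF a] by (auto intro!: holomorphic_intros)
  have I1: "((\<lambda>s. P (moebius a (ee s)) * cnj (Q (moebius a (ee s)))) has_integral SS) {0..1}"
  proof -
    have "((\<lambda>s. \<Sum>n<N. \<Sum>m<N. (p n * cnj (q m)) * (moebius a (ee s) ^ n * cnj (moebius a (ee s)) ^ m))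
           has_integral SS) {0..1}"
      unfolding SS_def
      by (rule has_integral_sum, simp, rule has_integral_sum, simp, rule has_integral_mult_right, rule int_phi[OF a])
    then show ?thesis unfolding P_def Q_def expand_prod .
  qed
  have I2: "((\<lambda>s. ca a * (kk (-a) (ee s) * P (ee s) * cnj (kk (-a) (ee s) * Q (ee s)))) has_integral SS) {0..1}"
  proof -
    have "((\<lambda>s. \<Sum>n<N. \<Sum>m<N. (p n * cnj (q m)) * (ca a * (kk (-a) (ee s) * cnj (kk (-a) (ee s)) * (ee s ^ n * cnj (ee s) ^ m))))
           has_integral SS) {0..1}"
      unfolding SS_def
      by (rule has_integral_sum, simp, rule has_integral_sum, simp, rule has_integral_mult_right, rule int_k[OF a])
    moreover have "(\<lambda>s. \<Sum>n<N. \<Sum>m<N. (p n * cnj (q m)) * (ca a * (kk (-a) (ee s) * cnj (kk (-a) (ee s)) * (ee s ^ n * cnj (ee s) ^ m))))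
        = (\<lambda>s. ca a * (kk (-a) (ee s) * P (ee s) * cnj (kk (-a) (ee s) * Q (ee s))))"
    proof
      fix s
      have "ca a * (kk (-a) (ee s) * P (ee s) * cnj (kk (-a) (ee s) * Q (ee s))) =
            ca a * (kk (-a) (ee s) * cnj (kk (-a) (ee s))) * (P (ee s) * cnj (Q (ee s)))"
        by (simp add: mult_ac)
      also have "\<dots> = (\<Sum>n<N. \<Sum>m<N. (p n * cnj (q m)) * (ca a * (kk (-a) (ee s) * cnj (kk (-a) (ee s)) * (ee s ^ n * cnj (ee s) ^ m))))"
        unfolding P_def Q_def expand_prod by (simp add: sum_distrib_left mult_ac)
      finally show "(\<Sum>n<N. \<Sum>m<N. (p n * cnj (q m)) * (ca a * (kk (-a) (ee s) * cnj (kk (-a) (ee s)) * (ee s ^ n * cnj (ee s) ^ m))))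
        = ca a * (kk (-a) (ee s) * P (ee s) * cnj (kk (-a) (ee s) * Q (ee s)))" by simp
    qed
    ultimately show ?thesis by simp
  qed
  have L: "h2_inner (\<lambda>z. P (moebius a z)) (\<lambda>z. Q (moebius a z)) = SS"
    using has_integral_unique[OF h2_inner_parseval1[OF holP holQ RR_gt1[OF a]] I1] .
  have R: "ca a * h2_inner (\<lambda>z. kk (-a) z * P z) (\<lambda>z. kk (-a) z * Q z) = SS"
    using has_integral_unique[OF has_integral_mult_right[OF h2_inner_parseval1[OF holkP holkQ RR_gt1[OF a]], of "ca a"] I2]
    by (simp add: mult_ac)
  show ?thesis using L R by simp
qed


definition tr :: "(complex \<Rightarrow> complex) \<Rightarrow> nat \<Rightarrow> complex \<Rightarrow> complex" where
  "tr F N = (\<lambda>z. \<Sum>n<N. tc F n * z ^ n)"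

lemma tr_hol [holomorphic_intros]: "tr F N holomorphic_on S"
  unfolding tr_def by (intro holomorphic_intros)

lemma tc_tr: "tc (tr F N) n = (if n < N then tc F n else 0)"
proof (rule tc_unique[of 1])
  fix z :: complex assume "norm z < 1"
  have "(\<lambda>n. (if n < N then tc F n else 0) * z ^ n) sums (\<Sum>n\<in>{..<N}. (if n < N then tc F n else 0) * z ^ n)"
    by (rule sums_finite) auto
  then show "(\<lambda>n. (if n < N then tc F n else 0) * z ^ n) sums tr F N z"
    by (simp add: tr_def)
qed simp

lemma tr_H2: "tr F N \<in> H2"
proof -
  have "sqs (\<lambda>n. if n < N then tc F n else 0)" by (rule sqs_finite_supp)
  then show ?thesis unfolding H2_iff by (simp add: tc_tr[abs_def] tr_hol)
qed

lemma h2_inner_self: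
  assumes "X \<in> H2"
  shows "h2_inner X X = complex_of_real (nn (tc X))"
proof -
  have s: "summable (\<lambda>n. (norm (tc X n))\<^sup>2)" using assms by (simp add: H2_def)
  have "h2_inner X X = (\<Sum>n. complex_of_real ((norm (tc X n))\<^sup>2))"
    unfolding h2_inner_def by (simp only: complex_norm_square)
  also have "\<dots> = complex_of_real (nn (tc X))"
    unfolding nn_def by (rule suminf_of_real[OF s, symmetric])
  finally show ?thesis .
qed

lemma nn_tr_le: "F \<in> H2 \<Longrightarrow> nn (tc (tr F N)) \<le> nn (tc F)"
proof -
  assume F: "F \<in> H2"
  have s: "summable (\<lambda>n. (norm (tc F n))\<^sup>2)" using F by (simp add: H2_def)
  have s2: "summable (\<lambda>n. (norm (tc (tr F N) n))\<^sup>2)" using tr_H2 by (simp add: H2_def)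
  show ?thesis unfolding nn_def
    by (rule suminf_le[OF _ s2 s]) (simp add: tc_tr)
qed

lemma tc_tail: "F holomorphic_on ball 0 1 \<Longrightarrow> tc (\<lambda>z. F z - tr F N z) n = (if n < N then 0 else tc F n)"
  by (subst tc_diff[of _ 1]) (auto simp: tc_tr intro: holomorphic_intros)

lemma nn_tail:
  assumes F: "F \<in> H2"
  shows "(\<lambda>N. nn (tc (\<lambda>z. F z - tr F N z))) \<longlonglongrightarrow> 0"
proof -
  define g where "g n = (norm (tc F n))\<^sup>2" for n
  have s: "summable g" unfolding g_def using F by (simp add: H2_def)
  have eq: "nn (tc (\<lambda>z. F z - tr F N z)) = suminf g - (\<Sum>n<N. g n)" for N
  proof -
    have sN: "summable (\<lambda>n. if n < N then g n else 0)"
      by (rule summable_finite[of "{..<N}"]) auto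
    have fin: "(\<Sum>n. if n < N then g n else 0) = (\<Sum>n<N. g n)"
      by (subst suminf_finite[of "{..<N}"]) auto
    have "(\<lambda>n. (norm (tc (\<lambda>z. F z - tr F N z) n))\<^sup>2) = (\<lambda>n. g n - (if n < N then g n else 0))"
      by (rule ext) (simp add: tc_tail[OF H2_hol[OF F]] g_def)
    then have "nn (tc (\<lambda>z. F z - tr F N z)) = (\<Sum>n. g n - (if n < N then g n else 0))"
      unfolding nn_def by simp
    also have "\<dots> = suminf g - (\<Sum>n<N. g n)"
      using suminf_diff[OF s sN] fin by simp
    finally show ?thesis .
  qed
  have "(\<lambda>N. \<Sum>n<N. g n) \<longlonglongrightarrow> suminf g" using s by (rule summable_LIMSEQ)
  then have "(\<lambda>N. suminf g - (\<Sum>n<N. g n)) \<longlonglongrightarrow> suminf g - suminf g"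
    by (intro tendsto_intros)
  then show ?thesis unfolding eq by simp
qed


definition Cm :: "complex \<Rightarrow> real" where "Cm a = (1 - (norm a)\<^sup>2) / (1 - norm a)\<^sup>2"

lemma Cm_nonneg: "norm a < 1 \<Longrightarrow> 0 \<le> Cm a"
  unfolding Cm_def by (intro divide_nonneg_nonneg) (auto simp: abs_square_le_1 less_imp_le)

lemma nn_nonneg_H2: "X \<in> H2 \<Longrightarrow> 0 \<le> nn (tc X)"
  by (rule nn_nonneg[OF H2_sqs])

lemma comp_hol:
  assumes a: "norm a < 1" and G: "G holomorphic_on ball 0 1"
  shows "(\<lambda>z. G (moebius a z)) holomorphic_on ball 0 1"
proof -
  have "moebius a holomorphic_on ball 0 1"
    by (rule holomorphic_on_subset[OF moeb_hol[OF a]]) (use RR_gt1[OF a] in auto)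
  moreover have "moebius a ` ball 0 1 \<subseteq> ball 0 1" using moeb_disc[OF a] by auto
  ultimately show ?thesis using holomorphic_on_compose_gen[of "moebius a" "ball 0 1" G "ball 0 1"] G
    by (simp add: o_def)
qed

lemma poly_bound:
  assumes a: "norm a < 1" and G: "G \<in> H2"
  shows "(\<lambda>z. tr G M (moebius a z)) \<in> H2"
    and "nn (tc (\<lambda>z. tr G M (moebius a z))) \<le> Cm a * nn (tc G)"
proof -
  define V where "V = (\<lambda>z. tr G M (moebius a z))"
  show VH2: "V \<in> H2" unfolding V_def
  proof (rule H2_bounded[OF comp_hol[OF a tr_hol[of G M]], where M="\<Sum>n<M. norm (tc G n)"])
    fix z :: complex assume "norm z < 1"
    then have w: "norm (moebius a z) \<le> 1" using moeb_disc[OF a] less_imp_le by blast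
    have "norm (tr G M (moebius a z)) \<le> (\<Sum>n<M. norm (tc G n * moebius a z ^ n))"
      unfolding tr_def by (rule norm_sum)
    also have "\<dots> \<le> (\<Sum>n<M. norm (tc G n))"
      using w by (intro sum_mono) (simp add: norm_mult norm_power mult_left_le power_le_one)
    finally show "norm (tr G M (moebius a z)) \<le> (\<Sum>n<M. norm (tc G n))" .
  qed
  define K where "K = (\<lambda>z. kk (-a) z * tr G M z)"
  have na: "norm (-a) < 1" using a by simp
  have KH2: "K \<in> H2" unfolding K_def by (rule H2_kk[OF na tr_H2])
  have "h2_inner V V = ca a * h2_inner K K"
    unfolding V_def K_def tr_def by (rule poly_identity[OF a])
  then have "complex_of_real (nn (tc V)) = complex_of_real (1 - (norm a)\<^sup>2) * complex_of_real (nn (tc K))"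
    using h2_inner_self[OF VH2] h2_inner_self[OF KH2] by (simp add: ca_def)
  then have e: "nn (tc V) = (1 - (norm a)\<^sup>2) * nn (tc K)"
    by (simp only: of_real_mult[symmetric] of_real_eq_iff)
  have "nn (tc K) \<le> (1 / (1 - norm (-a)))\<^sup>2 * nn (tc (tr G M))"
    unfolding K_def by (rule H2_mult_bounded(2)[OF kk_hol[OF na] kk_bound[OF na] tr_H2])
  also have "\<dots> \<le> (1 / (1 - norm (-a)))\<^sup>2 * nn (tc G)"
    by (intro mult_left_mono nn_tr_le G) auto
  finally have "nn (tc K) \<le> (1 / (1 - norm a))\<^sup>2 * nn (tc G)" by simp
  then have "(1 - (norm a)\<^sup>2) * nn (tc K) \<le> (1 - (norm a)\<^sup>2) * ((1 / (1 - norm a))\<^sup>2 * nn (tc G))"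
    using a by (intro mult_left_mono) (auto simp: abs_square_le_1 less_imp_le)
  then show "nn (tc V) \<le> Cm a * nn (tc G)"
    unfolding e by (simp add: Cm_def power_divide)
qed

lemma coeff_bound:
  assumes "G \<in> H2"
  shows "norm (tc G n) \<le> 1 + nn (tc G)"
proof -
  have s: "summable (\<lambda>n. (norm (tc G n))\<^sup>2)" using assms by (simp add: H2_def)
  have "(norm (tc G n))\<^sup>2 = (\<Sum>i\<in>{n}. (norm (tc G i))\<^sup>2)" by simp
  also have "\<dots> \<le> nn (tc G)" unfolding nn_def by (rule sum_le_suminf[OF s]) auto
  finally have "(norm (tc G n))\<^sup>2 \<le> nn (tc G)" .
  moreover have "norm (tc G n) \<le> 1 + (norm (tc G n))\<^sup>2"
    using two_uv[of "norm (tc G n)" 1] by (simp add: power2_eq_square) (smt (verit) norm_ge_zero)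
  ultimately show ?thesis by linarith
qed

lemma tail_bound:
  assumes G: "G \<in> H2" and w: "norm w \<le> \<rho>" and \<rho>: "\<rho> < 1"
  shows "norm (G w - tr G M w) \<le> (1 + nn (tc G)) * \<rho> ^ M / (1 - \<rho>)"
proof -
  define Bg where "Bg = 1 + nn (tc G)"
  define g where "g = tc G"
  have \<rho>0: "0 \<le> \<rho>" using w norm_ge_zero[of w] by linarith
  have gB: "norm (g n) \<le> Bg" for n unfolding g_def Bg_def by (rule coeff_bound[OF G])
  have Bg0: "0 \<le> Bg" using gB[of 0] by (smt (verit) norm_ge_zero)
  have S: "summable (\<lambda>n. g n * w ^ n)" and Gw: "G w = (\<Sum>n. g n * w ^ n)"
    using tc_sums[OF H2_hol[OF G], of w] w \<rho> by (auto simp: g_def sums_iff)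
  have split: "G w - tr G M w = (\<Sum>n. g (n + M) * w ^ (n + M))"
    using suminf_split_initial_segment[OF S, of M] Gw by (simp add: tr_def g_def)
  have bd: "norm (g (n + M) * w ^ (n + M)) \<le> Bg * \<rho> ^ M * \<rho> ^ n" for n
  proof -
    have "norm (g (n + M) * w ^ (n + M)) = norm (g (n + M)) * norm w ^ (n + M)"
      by (simp add: norm_mult norm_power)
    also have "\<dots> \<le> Bg * \<rho> ^ (n + M)"
      using gB w \<rho>0 Bg0 by (intro mult_mono power_mono) auto
    finally show ?thesis by (simp add: power_add mult_ac)
  qed
  have sg: "summable (\<lambda>n. Bg * \<rho> ^ M * \<rho> ^ n)"
    using \<rho> \<rho>0 by (intro summable_mult summable_geometric) simp
  have sn: "summable (\<lambda>n. norm (g (n + M) * w ^ (n + M)))"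
    by (rule summable_comparison_test[OF _ sg]) (use bd in auto)
  have "norm (G w - tr G M w) \<le> (\<Sum>n. norm (g (n + M) * w ^ (n + M)))"
    unfolding split by (rule summable_norm[OF sn])
  also have "\<dots> \<le> (\<Sum>n. Bg * \<rho> ^ M * \<rho> ^ n)"
    by (rule suminf_le[OF bd sn sg])
  also have "\<dots> = Bg * \<rho> ^ M / (1 - \<rho>)"
    using \<rho> \<rho>0 by (simp add: suminf_mult suminf_geometric summable_geometric)
  finally show ?thesis by (simp add: Bg_def)
qed

lemma H2_crit:
  assumes holG: "G holomorphic_on ball 0 1"
    and bd: "\<And>r. 0 < r \<Longrightarrow> r < 1 \<Longrightarrow> (\<Sum>n. (norm (tc G n))\<^sup>2 * r ^ (2*n)) \<le> B"
  shows "G \<in> H2" and "nn (tc G) \<le> B"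
proof -
  have part: "(\<Sum>n<N. (norm (tc G n))\<^sup>2) \<le> B" for N
  proof -
    have lim: "((\<lambda>r. \<Sum>n<N. (norm (tc G n))\<^sup>2 * r ^ (2*n)) \<longlongrightarrow> (\<Sum>n<N. (norm (tc G n))\<^sup>2 * 1 ^ (2*n))) (at_left 1)"
      by (intro tendsto_intros)
    have ev: "eventually (\<lambda>r. (\<Sum>n<N. (norm (tc G n))\<^sup>2 * r ^ (2*n)) \<le> B) (at_left (1::real))"
    proof -
      have "eventually (\<lambda>r. 0 < r \<and> r < 1) (at_left (1::real))"
        using eventually_at_left_real[of 0 1] by (rule eventually_mono) auto
      then show ?thesis
      proof (rule eventually_mono)
        fix r :: real assume r: "0 < r \<and> r < 1"
        have "(\<Sum>n<N. (norm (tc G n))\<^sup>2 * r ^ (2*n)) \<le> (\<Sum>n. (norm (tc G n))\<^sup>2 * r ^ (2*n))"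
          using r by (intro sum_le_suminf mean_sq(2)[OF holG]) auto
        also have "\<dots> \<le> B" using bd r by auto
        finally show "(\<Sum>n<N. (norm (tc G n))\<^sup>2 * r ^ (2*n)) \<le> B" .
      qed
    qed
    show ?thesis using tendsto_upperbound[OF lim ev] by simp
  qed
  have sG: "summable (\<lambda>n. (norm (tc G n))\<^sup>2)"
    by (rule summableI_nonneg_bounded[OF _ part]) auto
  then show "G \<in> H2" using holG by (simp add: H2_def)
  show "nn (tc G) \<le> B"
    unfolding nn_def by (rule suminf_le_const[OF sG part])
qed

lemma mean_le_nn:
  assumes X: "X \<in> H2" and r: "0 < r" "r < 1"
  shows "(\<Sum>n. (norm (tc X n))\<^sup>2 * r ^ (2*n)) \<le> nn (tc X)"
  unfolding nn_def
proof (rule suminf_le)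
  show "(norm (tc X n))\<^sup>2 * r ^ (2*n) \<le> (norm (tc X n))\<^sup>2" for n
    using r by (intro mult_left_le power_le_one) auto
  show "summable (\<lambda>n. (norm (tc X n))\<^sup>2 * r ^ (2*n))" by (rule mean_sq(2)[OF H2_hol[OF X] r])
  show "summable (\<lambda>n. (norm (tc X n))\<^sup>2)" using X by (simp add: H2_def)
qed


lemma sq_sum_le: "(u + v)\<^sup>2 \<le> 2 * u\<^sup>2 + 2 * v\<^sup>2" for u v :: real
  using two_uv[of u v] by (simp add: power2_sum)

lemma comp_bound:
  assumes a: "norm a < 1" and G: "G \<in> H2"
  shows "(\<lambda>z. G (moebius a z)) \<in> H2"
    and "nn (tc (\<lambda>z. G (moebius a z))) \<le> 2 * Cm a * nn (tc G)"
proof -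
  define V where "V = (\<lambda>z. G (moebius a z))"
  have holV: "V holomorphic_on ball 0 1" unfolding V_def by (rule comp_hol[OF a H2_hol[OF G]])
  have main: "(\<Sum>n. (norm (tc V n))\<^sup>2 * r ^ (2*n)) \<le> 2 * Cm a * nn (tc G)" if r: "0 < r" "r < 1" for r
  proof -
    define t where "t = 1 - (1 - (norm a)\<^sup>2) * (1 - r\<^sup>2) / 4"
    define \<rho> where "\<rho> = sqrt t"
    have a2: "0 \<le> 1 - (norm a)\<^sup>2" "1 - (norm a)\<^sup>2 \<le> 1" using a by (auto simp: abs_square_le_1 less_imp_le)
    have r2: "0 < 1 - r\<^sup>2" "1 - r\<^sup>2 \<le> 1" using r by (auto simp: abs_square_less_1)
    have prod: "(1 - (norm a)\<^sup>2) * (1 - r\<^sup>2) \<le> 1" using a2 r2 by (simp add: mult_le_one)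
    have pp: "0 < (1 - (norm a)\<^sup>2) * (1 - r\<^sup>2)"
      using a r2 by (intro mult_pos_pos) (auto simp: abs_square_less_1)
    have t0: "0 \<le> t" "t < 1" using prod pp by (auto simp: t_def)
    have \<rho>0: "0 \<le> \<rho>" and \<rho>1: "\<rho> < 1" using t0 by (auto simp: \<rho>_def)
    have wb: "norm (moebius a (complex_of_real r * ee s)) \<le> \<rho>" for s
    proof -
      have "(norm (moebius a (complex_of_real r * ee s)))\<^sup>2 \<le> t"
        unfolding t_def by (rule moeb_disc_bound[OF a _ r(2)]) (use r in \<open>simp add: norm_mult\<close>)
      then show ?thesis unfolding \<rho>_def by (rule real_le_rsqrt)
    qed
    define E where "E M = (1 + nn (tc G)) * \<rho> ^ M / (1 - \<rho>)" for M
    have IG: "((\<lambda>s. (norm (V (complex_of_real r * ee s)))\<^sup>2) has_integral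
           (\<Sum>n. (norm (tc V n))\<^sup>2 * r ^ (2*n))) {0..1}" by (rule mean_sq(1)[OF holV r])
    have bdM: "(\<Sum>n. (norm (tc V n))\<^sup>2 * r ^ (2*n)) \<le> 2 * Cm a * nn (tc G) + 2 * (E M)\<^sup>2" for M
    proof -
      define VM where "VM = (\<lambda>z. tr G M (moebius a z))"
      have VMH2: "VM \<in> H2" unfolding VM_def by (rule poly_bound(1)[OF a G])
      have IM: "((\<lambda>s. (norm (VM (complex_of_real r * ee s)))\<^sup>2) has_integral
           (\<Sum>n. (norm (tc VM n))\<^sup>2 * r ^ (2*n))) {0..1}" by (rule mean_sq(1)[OF H2_hol[OF VMH2] r])
      have IM2: "((\<lambda>s. 2 * (norm (VM (complex_of_real r * ee s)))\<^sup>2 + 2 * (E M)\<^sup>2) has_integral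
           (2 * (\<Sum>n. (norm (tc VM n))\<^sup>2 * r ^ (2*n)) + 2 * (E M)\<^sup>2)) {0..1}"
        using has_integral_add[OF has_integral_mult_right[OF IM, of 2] has_integral_const_real[of "2 * (E M)\<^sup>2" 0 1]]
        by simp
      have "(\<Sum>n. (norm (tc V n))\<^sup>2 * r ^ (2*n)) \<le> 2 * (\<Sum>n. (norm (tc VM n))\<^sup>2 * r ^ (2*n)) + 2 * (E M)\<^sup>2"
      proof (rule has_integral_le[OF IG IM2])
        fix s :: real assume "s \<in> {0..1}"
        define w where "w = moebius a (complex_of_real r * ee s)"
        have "norm (G w - tr G M w) \<le> E M"
          unfolding E_def by (rule tail_bound[OF G _ \<rho>1]) (simp add: w_def wb)
        then have "norm (G w) \<le> norm (tr G M w) + E M"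
          using norm_triangle_ineq2[of "G w" "tr G M w"] by linarith
        then have "(norm (G w))\<^sup>2 \<le> (norm (tr G M w) + E M)\<^sup>2"
          by (intro power_mono) auto
        also have "\<dots> \<le> 2 * (norm (tr G M w))\<^sup>2 + 2 * (E M)\<^sup>2" by (rule sq_sum_le)
        finally show "(norm (V (complex_of_real r * ee s)))\<^sup>2 \<le> 2 * (norm (VM (complex_of_real r * ee s)))\<^sup>2 + 2 * (E M)\<^sup>2"
          by (simp add: V_def VM_def w_def)
      qed
      also have "(\<Sum>n. (norm (tc VM n))\<^sup>2 * r ^ (2*n)) \<le> nn (tc VM)" by (rule mean_le_nn[OF VMH2 r])
      also have "nn (tc VM) \<le> Cm a * nn (tc G)" unfolding VM_def by (rule poly_bound(2)[OF a G])
      finally show ?thesis by simp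
    qed
    have "(\<lambda>M. E M) \<longlonglongrightarrow> (1 + nn (tc G)) * 0 / (1 - \<rho>)"
      unfolding E_def using \<rho>0 \<rho>1 by (intro tendsto_intros LIMSEQ_power_zero) auto
    then have "(\<lambda>M. 2 * Cm a * nn (tc G) + 2 * (E M)\<^sup>2) \<longlonglongrightarrow> 2 * Cm a * nn (tc G) + 2 * ((1 + nn (tc G)) * 0 / (1 - \<rho>))\<^sup>2"
      by (intro tendsto_intros)
    then have lim: "(\<lambda>M. 2 * Cm a * nn (tc G) + 2 * (E M)\<^sup>2) \<longlonglongrightarrow> 2 * Cm a * nn (tc G)" by simp
    show ?thesis by (rule LIMSEQ_le_const[OF lim]) (use bdM in auto)
  qed
  show "V \<in> H2" by (rule H2_crit(1)[OF holV main])
  show "nn (tc V) \<le> 2 * Cm a * nn (tc G)" by (rule H2_crit(2)[OF holV main])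
qed


lemma h2_inner_diff_right:
  assumes "f \<in> H2" "g \<in> H2" "h \<in> H2"
  shows "h2_inner f (\<lambda>z. g z - h z) = h2_inner f g - h2_inner f h"
proof -
  have "tc (\<lambda>z. g z - h z) n = tc g n - tc h n" for n
    using assms by (intro tc_diff[of _ 1]) (auto simp: H2_iff)
  then show ?thesis unfolding h2_inner_def
    using assms by (simp add: right_diff_distrib suminf_diff[symmetric] sqs_ip_summable H2_iff)
qed

lemma h2_inner_CS:
  assumes "X \<in> H2" "Y \<in> H2"
  shows "norm (h2_inner X Y) \<le> sqrt (nn (tc X)) * sqrt (nn (tc Y))"
  unfolding h2_inner_def by (rule CS[OF H2_sqs[OF assms(1)] H2_sqs[OF assms(2)]])

lemma inner_conv:
  assumes X: "X \<in> H2" and Y: "Y \<in> H2" and XN: "\<And>N. XN N \<in> H2" and YN: "\<And>N. YN N \<in> H2"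
    and cX: "(\<lambda>N. nn (tc (\<lambda>z. X z - XN N z))) \<longlonglongrightarrow> 0"
    and cY: "(\<lambda>N. nn (tc (\<lambda>z. Y z - YN N z))) \<longlonglongrightarrow> 0"
    and B: "\<And>N. nn (tc (XN N)) \<le> B"
  shows "(\<lambda>N. h2_inner (XN N) (YN N)) \<longlonglongrightarrow> h2_inner X Y"
proof -
  have dX: "(\<lambda>z. X z - XN N z) \<in> H2" for N by (rule H2_diff[OF X XN])
  have dY: "(\<lambda>z. Y z - YN N z) \<in> H2" for N by (rule H2_diff[OF Y YN])
  have eq: "h2_inner X Y - h2_inner (XN N) (YN N) =
      h2_inner (\<lambda>z. X z - XN N z) Y + h2_inner (XN N) (\<lambda>z. Y z - YN N z)" for N
    using h2_inner_diff_left[OF X XN Y, of N] h2_inner_diff_right[OF XN Y YN, of N] by simp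
  have bd: "norm (h2_inner X Y - h2_inner (XN N) (YN N)) \<le>
      sqrt (nn (tc (\<lambda>z. X z - XN N z))) * sqrt (nn (tc Y)) + sqrt B * sqrt (nn (tc (\<lambda>z. Y z - YN N z)))" for N
  proof -
    have "norm (h2_inner X Y - h2_inner (XN N) (YN N)) \<le>
        norm (h2_inner (\<lambda>z. X z - XN N z) Y) + norm (h2_inner (XN N) (\<lambda>z. Y z - YN N z))"
      unfolding eq by (rule norm_triangle_ineq)
    also have "norm (h2_inner (\<lambda>z. X z - XN N z) Y) \<le> sqrt (nn (tc (\<lambda>z. X z - XN N z))) * sqrt (nn (tc Y))"
      by (rule h2_inner_CS[OF dX Y])
    also have "norm (h2_inner (XN N) (\<lambda>z. Y z - YN N z)) \<le> sqrt (nn (tc (XN N))) * sqrt (nn (tc (\<lambda>z. Y z - YN N z)))"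
      by (rule h2_inner_CS[OF XN dY])
    also have "\<dots> \<le> sqrt B * sqrt (nn (tc (\<lambda>z. Y z - YN N z)))"
      using B[of N] nn_nonneg_H2[OF dY] by (intro mult_right_mono) auto
    finally show ?thesis by simp
  qed
  have "(\<lambda>N. sqrt (nn (tc (\<lambda>z. X z - XN N z))) * sqrt (nn (tc Y)) + sqrt B * sqrt (nn (tc (\<lambda>z. Y z - YN N z))))
        \<longlonglongrightarrow> sqrt 0 * sqrt (nn (tc Y)) + sqrt B * sqrt 0"
    by (intro tendsto_intros cX cY)
  then have g0: "(\<lambda>N. sqrt (nn (tc (\<lambda>z. X z - XN N z))) * sqrt (nn (tc Y)) + sqrt B * sqrt (nn (tc (\<lambda>z. Y z - YN N z))))
        \<longlonglongrightarrow> 0" by simp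
  have "(\<lambda>N. h2_inner X Y - h2_inner (XN N) (YN N)) \<longlonglongrightarrow> 0"
    by (rule Lim_null_comparison[OF _ g0]) (use bd in auto)
  then have "(\<lambda>N. h2_inner X Y - (h2_inner X Y - h2_inner (XN N) (YN N))) \<longlonglongrightarrow> h2_inner X Y - 0"
    by (intro tendsto_intros)
  then show ?thesis by simp
qed

lemma nn_cong:
  assumes "\<And>z. norm z < 1 \<Longrightarrow> f z = g z"
  shows "nn (tc f) = nn (tc g)"
proof -
  have "tc f n = tc g n" for n using assms by (intro tc_cong[of 1]) auto
  then show ?thesis by (simp add: nn_def)
qed

lemma comp_identity:
  assumes a: "norm a < 1" and F: "F \<in> H2" and H: "H \<in> H2"
  shows "h2_inner (\<lambda>z. F (moebius a z)) (\<lambda>z. H (moebius a z)) =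
         ca a * h2_inner (\<lambda>z. kk (-a) z * F z) (\<lambda>z. kk (-a) z * H z)"
proof -
  have na: "norm (-a) < 1" using a by simp
  define K where "K = (1 / (1 - norm a))\<^sup>2"
  have K0: "0 \<le> K" by (simp add: K_def)
  have Cm0: "0 \<le> Cm a" by (rule Cm_nonneg[OF a])
  have kbd: "nn (tc (\<lambda>z. kk (-a) z * G z)) \<le> K * nn (tc G)" if "G \<in> H2" for G
    using H2_mult_bounded(2)[OF kk_hol[OF na] kk_bound[OF na] that] by (simp add: K_def)
  have trtail: "(\<lambda>N. nn (tc (\<lambda>z. G z - tr G N z))) \<longlonglongrightarrow> 0" if "G \<in> H2" for G
    by (rule nn_tail[OF that])
  have Vconv: "(\<lambda>N. nn (tc (\<lambda>z. G (moebius a z) - tr G N (moebius a z)))) \<longlonglongrightarrow> 0" if G: "G \<in> H2" for G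
  proof (rule Lim_null_comparison[OF _ tendsto_mult_right_zero[OF trtail[OF G], of "2 * Cm a"]])
    show "\<forall>\<^sub>F N in sequentially. norm (nn (tc (\<lambda>z. G (moebius a z) - tr G N (moebius a z)))) \<le>
          2 * Cm a * nn (tc (\<lambda>z. G z - tr G N z))"
    proof (intro always_eventually allI)
      fix N
      have D: "(\<lambda>z. G z - tr G N z) \<in> H2" by (rule H2_diff[OF G tr_H2])
      have "0 \<le> nn (tc (\<lambda>z. G (moebius a z) - tr G N (moebius a z)))"
        using nn_nonneg_H2[OF comp_bound(1)[OF a D]] by simp
      then show "norm (nn (tc (\<lambda>z. G (moebius a z) - tr G N (moebius a z)))) \<le>
          2 * Cm a * nn (tc (\<lambda>z. G z - tr G N z))"
        using comp_bound(2)[OF a D] by simp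
    qed
  qed
  have kconv: "(\<lambda>N. nn (tc (\<lambda>z. kk (-a) z * G z - kk (-a) z * tr G N z))) \<longlonglongrightarrow> 0" if G: "G \<in> H2" for G
  proof (rule Lim_null_comparison[OF _ tendsto_mult_right_zero[OF trtail[OF G], of K]])
    show "\<forall>\<^sub>F N in sequentially. norm (nn (tc (\<lambda>z. kk (-a) z * G z - kk (-a) z * tr G N z))) \<le>
          K * nn (tc (\<lambda>z. G z - tr G N z))"
    proof (intro always_eventually allI)
      fix N
      have D: "(\<lambda>z. G z - tr G N z) \<in> H2" by (rule H2_diff[OF G tr_H2])
      have e: "(\<lambda>z. kk (-a) z * G z - kk (-a) z * tr G N z) = (\<lambda>z. kk (-a) z * (G z - tr G N z))"
        by (simp add: algebra_simps)
      have "0 \<le> nn (tc (\<lambda>z. kk (-a) z * (G z - tr G N z)))"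
        using nn_nonneg_H2[OF H2_kk[OF na D]] .
      then show "norm (nn (tc (\<lambda>z. kk (-a) z * G z - kk (-a) z * tr G N z))) \<le>
          K * nn (tc (\<lambda>z. G z - tr G N z))"
        unfolding e using kbd[OF D] by simp
    qed
  qed
  have L: "(\<lambda>N. h2_inner (\<lambda>z. tr F N (moebius a z)) (\<lambda>z. tr H N (moebius a z))) \<longlonglongrightarrow>
        h2_inner (\<lambda>z. F (moebius a z)) (\<lambda>z. H (moebius a z))"
  proof (rule inner_conv[where XN = "\<lambda>N z. tr F N (moebius a z)" and YN = "\<lambda>N z. tr H N (moebius a z)"])
    show "(\<lambda>z. F (moebius a z)) \<in> H2" by (rule comp_bound(1)[OF a F])
    show "(\<lambda>z. H (moebius a z)) \<in> H2" by (rule comp_bound(1)[OF a H])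
    show "(\<lambda>z. tr F N (moebius a z)) \<in> H2" for N by (rule poly_bound(1)[OF a F])
    show "(\<lambda>z. tr H N (moebius a z)) \<in> H2" for N by (rule poly_bound(1)[OF a H])
    show "(\<lambda>N. nn (tc (\<lambda>z. F (moebius a z) - tr F N (moebius a z)))) \<longlonglongrightarrow> 0" by (rule Vconv[OF F])
    show "(\<lambda>N. nn (tc (\<lambda>z. H (moebius a z) - tr H N (moebius a z)))) \<longlonglongrightarrow> 0" by (rule Vconv[OF H])
    fix N
    have "nn (tc (\<lambda>z. tr F N (moebius a z))) \<le> 2 * Cm a * nn (tc (tr F N))"
      by (rule comp_bound(2)[OF a tr_H2])
    also have "\<dots> \<le> 2 * Cm a * nn (tc F)" using Cm0 by (intro mult_left_mono nn_tr_le F) auto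
    finally show "nn (tc (\<lambda>z. tr F N (moebius a z))) \<le> 2 * Cm a * nn (tc F)" .
  qed
  have R: "(\<lambda>N. h2_inner (\<lambda>z. kk (-a) z * tr F N z) (\<lambda>z. kk (-a) z * tr H N z)) \<longlonglongrightarrow>
        h2_inner (\<lambda>z. kk (-a) z * F z) (\<lambda>z. kk (-a) z * H z)"
  proof (rule inner_conv[where XN = "\<lambda>N z. kk (-a) z * tr F N z" and YN = "\<lambda>N z. kk (-a) z * tr H N z"])
    show "(\<lambda>z. kk (-a) z * F z) \<in> H2" by (rule H2_kk[OF na F])
    show "(\<lambda>z. kk (-a) z * H z) \<in> H2" by (rule H2_kk[OF na H])
    show "(\<lambda>z. kk (-a) z * tr F N z) \<in> H2" for N by (rule H2_kk[OF na tr_H2])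
    show "(\<lambda>z. kk (-a) z * tr H N z) \<in> H2" for N by (rule H2_kk[OF na tr_H2])
    show "(\<lambda>N. nn (tc (\<lambda>z. kk (-a) z * F z - kk (-a) z * tr F N z))) \<longlonglongrightarrow> 0" by (rule kconv[OF F])
    show "(\<lambda>N. nn (tc (\<lambda>z. kk (-a) z * H z - kk (-a) z * tr H N z))) \<longlonglongrightarrow> 0" by (rule kconv[OF H])
    fix N
    have "nn (tc (\<lambda>z. kk (-a) z * tr F N z)) \<le> K * nn (tc (tr F N))" by (rule kbd[OF tr_H2])
    also have "\<dots> \<le> K * nn (tc F)" using K0 by (intro mult_left_mono nn_tr_le F) auto
    finally show "nn (tc (\<lambda>z. kk (-a) z * tr F N z)) \<le> K * nn (tc F)" .
  qed
  have eqN: "h2_inner (\<lambda>z. tr F N (moebius a z)) (\<lambda>z. tr H N (moebius a z)) =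
        ca a * h2_inner (\<lambda>z. kk (-a) z * tr F N z) (\<lambda>z. kk (-a) z * tr H N z)" for N
    unfolding tr_def by (rule poly_identity[OF a])
  have R': "(\<lambda>N. h2_inner (\<lambda>z. tr F N (moebius a z)) (\<lambda>z. tr H N (moebius a z))) \<longlonglongrightarrow>
        ca a * h2_inner (\<lambda>z. kk (-a) z * F z) (\<lambda>z. kk (-a) z * H z)"
    unfolding eqN by (intro tendsto_intros R)
  show ?thesis using LIMSEQ_unique[OF L R'] .
qed


theorem lemma2p4:
  fixes \<Theta> f :: "complex \<Rightarrow> complex" and a :: complex
  assumes "inner_fun \<Theta>"
    and "a \<in> unit_disc" and "a \<noteq> 0"
    and "\<Theta> (- a) \<noteq> 0"
    and "f \<in> model_space \<Theta>"
  shows "\<exists>c::complex. (\<lambda>z. f (moebius a z) - c) \<in> model_space (\<Theta> \<circ> moebius a)"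
proof -
  have holT: "\<Theta> holomorphic_on ball 0 1" using assms(1) by (simp add: inner_fun_def)
  obtain M where M0: "\<forall>z\<in>ball 0 1. norm (\<Theta> z) \<le> M"
    using assms(1) unfolding inner_fun_def by auto
  then have M: "\<And>z. norm z < 1 \<Longrightarrow> norm (\<Theta> z) \<le> M" by auto
  have a: "norm a < 1" using assms(2) by simp
  have na: "norm (-a) < 1" using a by simp
  have f: "f \<in> model_space \<Theta>" by (rule assms(5))
  have fH2: "f \<in> H2" using f by (simp add: model_space_def)
  define c where "c = f 0 + h2_inner f (\<lambda>z. z * DD \<Theta> (-a) z) / cnj (\<Theta> (-a))"
  have Fc: "(\<lambda>z. f z - c) \<in> H2" by (rule H2_diff[OF fH2 H2_const])
  have GH2: "(\<lambda>z. f (moebius a z) - c) \<in> H2"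
    using comp_bound(1)[OF a Fc] by simp
  have orth: "h2_inner (\<lambda>z. f (moebius a z) - c) (\<lambda>z. (\<Theta> \<circ> moebius a) z * h z) = 0" if h: "h \<in> H2" for h
  proof -
    define u where "u = (\<lambda>z. h (moebius (-a) z))"
    have uH2: "u \<in> H2" unfolding u_def by (rule comp_bound(1)[OF na h])
    have TuH2: "(\<lambda>z. \<Theta> z * u z) \<in> H2" by (rule H2_mult_bounded(1)[OF holT M uH2])
    define w where "w = (\<lambda>z. kk (-a) z * u z)"
    have wH2: "w \<in> H2" unfolding w_def by (rule H2_kk[OF na uH2])
    have "h2_inner (\<lambda>z. f (moebius a z) - c) (\<lambda>z. (\<Theta> \<circ> moebius a) z * h z) =
          h2_inner (\<lambda>z. f (moebius a z) - c) (\<lambda>z. \<Theta> (moebius a z) * u (moebius a z))"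
      by (intro h2_inner_cong) (auto simp: u_def moeb_inv[OF a])
    also have "\<dots> = ca a * h2_inner (\<lambda>z. kk (-a) z * (f z - c)) (\<lambda>z. kk (-a) z * (\<Theta> z * u z))"
      using comp_identity[OF a Fc TuH2] by simp
    also have "h2_inner (\<lambda>z. kk (-a) z * (f z - c)) (\<lambda>z. kk (-a) z * (\<Theta> z * u z)) =
        h2_inner (\<lambda>z. kk (-a) z * (f z - c)) (\<lambda>z. \<Theta> z * w z)"
      by (simp add: w_def mult_ac)
    also have "\<dots> = 0"
      unfolding c_def by (rule partII[OF holT M f na assms(4) wH2])
    finally show ?thesis by simp
  qed
  have "(\<lambda>z. f (moebius a z) - c) \<in> model_space (\<Theta> \<circ> moebius a)"
    unfolding model_space_def using GH2 orth by auto
  then show ?thesis by blast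
qed

end
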